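(* Let $M=\langle W,W^\bot,\preceq,R,V\rangle$ be a $\mathsf{CK}$-model, $w\in W$, and $\varphi$ a well-named $\mu$-sentence. Then (1) $\mathsf I$ has a winning strategy for $\mathcal G(M,w\models\varphi)$ if and only if $M,w\models\varphi$; and (2) $\mathsf{II}$ has a winning strategy for $\mathcal G(M,w\models\varphi)$ if and only if $M,w\not\models\varphi$.
   Context: Syntax. Fix disjoint sets $\mathrm{Prop}$ (propositions) and $\mathrm{Var}$ (propositional variables). $\mu$-formulas are given by $\varphi::=P\mid X\mid\bot\mid\varphi\land\varphi\mid\varphi\lor\varphi\mid\varphi\to\varphi\mid\Box\varphi\mid\Diamond\varphi\mid\mu X.\varphi\mid\nu X.\varphi$ with $P\in\mathrm{Prop}$, $X\in\mathrm{Var}$, where $\mu X.\varphi$ and $\nu X.\varphi$ may only be formed when $X$ is positive in $\varphi$. Positivity/negativity is defined inductively: $X$ is both positive and negative in $P$, in $\bot$, and in any variable $Y\neq X$; $X$ is positive in $X$; if $X$ is positive (resp. negative) in $\varphi$ and $\psi$, then it is positive (resp. negative) in $\varphi\land\psi$, $\varphi\lor\psi$, $\Box\varphi$, $\Diamond\varphi$; if $X$ is negative (resp. positive) in $\varphi$ and positive (resp. negative) in $\psi$, then $X$ is positive (resp. negative) in $\varphi\to\psi$; $X$ is both positive and negative in $\mu X.\varphi$ and $\nu X.\varphi$. $\eta$ ranges over $\{\mu,\nu\}$. A sentence has no free variables. $\mathrm{Sub}(\varphi)$ is the set of subformulas. $\varphi$ is guarded if for every subformula $\eta X.\psi$, every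 occurrence of $X$ in $\psi$ is in the scope of $\Box$ or $\Diamond$; well-bounded if each variable occurring bound in $\varphi$ is bound by exactly one fixed-point operator $\eta X$ in $\varphi$; well-named if guarded and well-bounded. For well-named $\varphi$ and a subformula $\eta X.\psi$, write $\psi_X:=\psi$. Models. A $\mathsf{CK}$-model is $M=\langle W,W^\bot,\preceq,R,V\rangle$ with $W\neq\emptyset$, $W^\bot\subseteq W$ (fallible worlds), $\preceq$ a reflexive transitive relation on $W$, $R$ a binary relation on $W$, and $V:\mathrm{Prop}\to\mathcal P(W)$, such that: $w\preceq v$ and $w\in V(P)$ imply $v\in V(P)$; $W^\bot\subseteq V(P)$ for all $P$; and $W^\bot$ is closed under $\preceq$ and $R$. $M[X\mapsto A]$ denotes $M$ with $V(X):=A$. Semantics. $w\preceq;R\,u$ means there is $v$ with $w\preceq v$ and $vRu$. $\|P\|=V(P)$; $\|\bot\|=W^\bot$; $\|\varphi\land\psi\|=\|\varphi\|\cap\|\psi\|$; $\|\varphi\lor\psi\|=\|\varphi\|\cup\|\psi\|$; $\|\varphi\to\psi\|=\{w\mid\forall v\,(w\preceq v\wedge v\in\|\varphi\|\Rightarrow v\in\|\psi\|)\}$; $\|\Box\varphi\|=\{w\mid\forall u\,(w\preceq;R\,u\Rightarrow u\in\|\varphi\|)\}$; $\|\Diamond\varphi\|=\{w\mid\forall v\,(w\preceq v\Rightarrow\exists u\,(vRu\wedge u\in\|\varphi\|))\}$; $\|\mu X.\varphi\|$, $\|\nu X.\varphi\|$ are the least and greatest fixed points of $A\mapsto\|\varphi\|^{M[X\mapsto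 A]}$. $M,w\models\varphi$ means $w\in\|\varphi\|^M$. Evaluation game $\mathcal G(M,w\models\varphi)$. Two players $\mathsf I,\mathsf{II}$ hold the two roles Verifier ($\mathsf V$) and Refuter ($\mathsf R$), always different; $\bar{\mathsf Q}$ is the role dual to $\mathsf Q$. Positions are $\langle v,\psi,\mathsf Q\rangle$ with $v\in W$, $\psi\in\mathrm{Sub}(\varphi)$, plus auxiliary positions $\langle v,\hat\Diamond\psi,\mathsf Q\rangle$ for $\Diamond\psi\in\mathrm{Sub}(\varphi)$ and $\langle v,\psi?\theta,\mathsf Q\rangle$ for $\psi\to\theta\in\mathrm{Sub}(\varphi)$; $\mathsf Q$ is the current role of $\mathsf I$ ($\mathsf{II}$ has $\bar{\mathsf Q}$). Initial position $\langle w,\varphi,\mathsf V\rangle$. Each position is owned by the player holding the indicated role, who picks the next position from the listed set: Owned by the Verifier role: $\langle v,P,\mathsf Q\rangle$ with $v\notin V(P)$: no moves; $\langle v,\bot,\mathsf Q\rangle$ with $v\notin W^\bot$: no moves; $\langle v,\psi\lor\theta,\mathsf Q\rangle\to\{\langle v,\psi,\mathsf Q\rangle,\langle v,\theta,\mathsf Q\rangle\}$; $\langle v,\psi?\theta,\mathsf Q\rangle\to\{\langle v,\psi,\bar{\mathsf Q}\rangle,\langle v,\theta,\mathsf Q\rangle\}$; $\langle v,\hat\Diamond\psi,\mathsf Q\rangle\to\{\langle u,\psi,\mathsf Q\rangle\mid vRu\}$; $\langle v,\mu X.\psi_X,\mathsf Q\rangle\to\{\langle v,\psi_X,\mathsf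 Q\rangle\}$; $\langle v,X,\mathsf Q\rangle\to\{\langle v,\mu X.\psi_X,\mathsf Q\rangle\}$ when $X$ is bound by $\mu$. Owned by the Refuter role: $\langle v,P,\mathsf Q\rangle$ with $v\in V(P)$: no moves; $\langle v,\bot,\mathsf Q\rangle$ with $v\in W^\bot$: no moves; $\langle v,\psi\land\theta,\mathsf Q\rangle\to\{\langle v,\psi,\mathsf Q\rangle,\langle v,\theta,\mathsf Q\rangle\}$; $\langle v,\psi\to\theta,\mathsf Q\rangle\to\{\langle u,\psi?\theta,\mathsf Q\rangle\mid v\preceq u\}$; $\langle v,\Box\psi,\mathsf Q\rangle\to\{\langle u,\psi,\mathsf Q\rangle\mid v\preceq;R\,u\}$; $\langle v,\Diamond\psi,\mathsf Q\rangle\to\{\langle u,\hat\Diamond\psi,\mathsf Q\rangle\mid v\preceq u\}$; $\langle v,\nu X.\psi_X,\mathsf Q\rangle\to\{\langle v,\psi_X,\mathsf Q\rangle\}$; $\langle v,X,\mathsf Q\rangle\to\{\langle v,\nu X.\psi_X,\mathsf Q\rangle\}$ when $X$ is bound by $\nu$. A run is a maximal (finite or infinite) sequence of positions starting at the initial position, each obtained by a legal move. The move from $\langle v,X,\mathsf Q\rangle$ to $\langle v,\eta X.\psi_X,\mathsf Q\rangle$ regenerates $\eta X.\psi_X$. A fixed-point subformula $\eta X.\psi_X$ is owned by $\mathsf I$ if some position $\langle v,\eta X.\psi_X,\mathsf Q\rangle$ is reachable and either ($\mathsf Q=\mathsf V$ and $\eta=\nu$) or ($\mathsf Q=\mathsf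 R$ and $\eta=\mu$); otherwise it is owned by $\mathsf{II}$. Winning: in a finite run, the owner of the last position (who has no move) loses. In an infinite run, let $\eta X.\psi_X$ be the outermost fixed-point formula regenerated infinitely often (every other infinitely often regenerated fixed-point formula is a subformula of it); $\mathsf I$ wins iff $\mathsf I$ owns $\eta X.\psi_X$, otherwise $\mathsf{II}$ wins. A (positional) strategy for a player maps each position owned by that player having at least one move to one of its legal moves; it is winning if the player wins every run in which they follow it. *)

theory Defs
  imports Main
begin

datatype ('p, 'v) fm =
    Prop 'p
  | Var 'v
  | Bot
  | And "('p, 'v) fm" "('p, 'v) fm"
  | Or "('p, 'v) fm" "('p, 'v) fm"
  | Imp "('p, 'v) fm" "('p, 'v) fm"
  | Box "('p, 'v) fm"
  | Dia "('p, 'v) fm"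
  | Mu 'v "('p, 'v) fm"
  | Nu 'v "('p, 'v) fm"

text \<open>polar X True phi: X is positive in phi; polar X False phi: X is negative in phi.\<close>
fun polar :: "'v \<Rightarrow> bool \<Rightarrow> ('p, 'v) fm \<Rightarrow> bool" where
  "polar X b (Prop P) = True"
| "polar X b Bot = True"
| "polar X b (Var Y) = (if Y = X then b else True)"
| "polar X b (And f g) = (polar X b f \<and> polar X b g)"
| "polar X b (Or f g) = (polar X b f \<and> polar X b g)"
| "polar X b (Imp f g) = (polar X (\<not> b) f \<and> polar X b g)"
| "polar X b (Box f) = polar X b f"
| "polar X b (Dia f) = polar X b f"
| "polar X b (Mu Y f) = (if Y = X then True else polar X b f)"
| "polar X b (Nu Y f) = (if Y = X then True else polar X b f)"

abbreviation positive :: "'v \<Rightarrow> ('p, 'v) fm \<Rightarrow> bool" where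
  "positive X f \<equiv> polar X True f"

fun mu_formula :: "('p, 'v) fm \<Rightarrow> bool" where
  "mu_formula (Prop P) = True"
| "mu_formula Bot = True"
| "mu_formula (Var Y) = True"
| "mu_formula (And f g) = (mu_formula f \<and> mu_formula g)"
| "mu_formula (Or f g) = (mu_formula f \<and> mu_formula g)"
| "mu_formula (Imp f g) = (mu_formula f \<and> mu_formula g)"
| "mu_formula (Box f) = mu_formula f"
| "mu_formula (Dia f) = mu_formula f"
| "mu_formula (Mu X f) = (positive X f \<and> mu_formula f)"
| "mu_formula (Nu X f) = (positive X f \<and> mu_formula f)"

fun free_vars :: "('p, 'v) fm \<Rightarrow> 'v set" where
  "free_vars (Prop P) = {}"
| "free_vars Bot = {}"
| "free_vars (Var Y) = {Y}"
| "free_vars (And f g) = free_vars f \<union> free_vars g"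
| "free_vars (Or f g) = free_vars f \<union> free_vars g"
| "free_vars (Imp f g) = free_vars f \<union> free_vars g"
| "free_vars (Box f) = free_vars f"
| "free_vars (Dia f) = free_vars f"
| "free_vars (Mu X f) = free_vars f - {X}"
| "free_vars (Nu X f) = free_vars f - {X}"

definition sentence :: "('p, 'v) fm \<Rightarrow> bool" where
  "sentence f \<longleftrightarrow> free_vars f = {}"

fun Sub :: "('p, 'v) fm \<Rightarrow> ('p, 'v) fm set" where
  "Sub (Prop P) = {Prop P}"
| "Sub Bot = {Bot}"
| "Sub (Var Y) = {Var Y}"
| "Sub (And f g) = insert (And f g) (Sub f \<union> Sub g)"
| "Sub (Or f g) = insert (Or f g) (Sub f \<union> Sub g)"
| "Sub (Imp f g) = insert (Imp f g) (Sub f \<union> Sub g)"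
| "Sub (Box f) = insert (Box f) (Sub f)"
| "Sub (Dia f) = insert (Dia f) (Sub f)"
| "Sub (Mu X f) = insert (Mu X f) (Sub f)"
| "Sub (Nu X f) = insert (Nu X f) (Sub f)"

fun guarded_in :: "'v \<Rightarrow> ('p, 'v) fm \<Rightarrow> bool" where
  "guarded_in X (Prop P) = True"
| "guarded_in X Bot = True"
| "guarded_in X (Var Y) = (Y \<noteq> X)"
| "guarded_in X (And f g) = (guarded_in X f \<and> guarded_in X g)"
| "guarded_in X (Or f g) = (guarded_in X f \<and> guarded_in X g)"
| "guarded_in X (Imp f g) = (guarded_in X f \<and> guarded_in X g)"
| "guarded_in X (Box f) = True"
| "guarded_in X (Dia f) = True"
| "guarded_in X (Mu Y f) = guarded_in X f"
| "guarded_in X (Nu Y f) = guarded_in X f"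

definition guarded :: "('p, 'v) fm \<Rightarrow> bool" where
  "guarded f \<longleftrightarrow> (\<forall>X g. (Mu X g \<in> Sub f \<or> Nu X g \<in> Sub f) \<longrightarrow> guarded_in X g)"

fun occurs :: "'v \<Rightarrow> ('p, 'v) fm \<Rightarrow> bool" where
  "occurs X (Prop P) = False"
| "occurs X Bot = False"
| "occurs X (Var Y) = (Y = X)"
| "occurs X (And f g) = (occurs X f \<or> occurs X g)"
| "occurs X (Or f g) = (occurs X f \<or> occurs X g)"
| "occurs X (Imp f g) = (occurs X f \<or> occurs X g)"
| "occurs X (Box f) = occurs X f"
| "occurs X (Dia f) = occurs X f"
| "occurs X (Mu Y f) = occurs X f"
| "occurs X (Nu Y f) = occurs X f"

fun occurs_bound :: "'v \<Rightarrow> ('p, 'v) fm \<Rightarrow> bool" where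
  "occurs_bound X (Prop P) = False"
| "occurs_bound X Bot = False"
| "occurs_bound X (Var Y) = False"
| "occurs_bound X (And f g) = (occurs_bound X f \<or> occurs_bound X g)"
| "occurs_bound X (Or f g) = (occurs_bound X f \<or> occurs_bound X g)"
| "occurs_bound X (Imp f g) = (occurs_bound X f \<or> occurs_bound X g)"
| "occurs_bound X (Box f) = occurs_bound X f"
| "occurs_bound X (Dia f) = occurs_bound X f"
| "occurs_bound X (Mu Y f) = ((Y = X \<and> occurs X f) \<or> occurs_bound X f)"
| "occurs_bound X (Nu Y f) = ((Y = X \<and> occurs X f) \<or> occurs_bound X f)"

fun binder_count :: "'v \<Rightarrow> ('p, 'v) fm \<Rightarrow> nat" where
  "binder_count X (Prop P) = 0"
| "binder_count X Bot = 0"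
| "binder_count X (Var Y) = 0"
| "binder_count X (And f g) = binder_count X f + binder_count X g"
| "binder_count X (Or f g) = binder_count X f + binder_count X g"
| "binder_count X (Imp f g) = binder_count X f + binder_count X g"
| "binder_count X (Box f) = binder_count X f"
| "binder_count X (Dia f) = binder_count X f"
| "binder_count X (Mu Y f) = (if Y = X then 1 else 0) + binder_count X f"
| "binder_count X (Nu Y f) = (if Y = X then 1 else 0) + binder_count X f"

definition well_bounded :: "('p, 'v) fm \<Rightarrow> bool" where
  "well_bounded f \<longleftrightarrow> (\<forall>X. occurs_bound X f \<longrightarrow> binder_count X f = 1)"

definition well_named :: "('p, 'v) fm \<Rightarrow> bool" where
  "well_named f \<longleftrightarrow> guarded f \<and> well_bounded f"

record ('w, 'p) ck_struct =
  mW :: "'w set"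
  mWb :: "'w set"
  mLe :: "('w \<times> 'w) set"
  mR :: "('w \<times> 'w) set"
  mV :: "'p \<Rightarrow> 'w set"

definition ck_model :: "('w, 'p, 'x) ck_struct_scheme \<Rightarrow> bool" where
  "ck_model M \<longleftrightarrow>
     mW M \<noteq> {} \<and> mWb M \<subseteq> mW M \<and>
     mLe M \<subseteq> mW M \<times> mW M \<and> refl_on (mW M) (mLe M) \<and> trans (mLe M) \<and>
     mR M \<subseteq> mW M \<times> mW M \<and>
     (\<forall>P. mV M P \<subseteq> mW M) \<and>
     (\<forall>P w v. (w, v) \<in> mLe M \<and> w \<in> mV M P \<longrightarrow> v \<in> mV M P) \<and>
     (\<forall>P. mWb M \<subseteq> mV M P) \<and>
     (\<forall>w v. w \<in> mWb M \<and> (w, v) \<in> mLe M \<longrightarrow> v \<in> mWb M) \<and>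
     (\<forall>w v. w \<in> mWb M \<and> (w, v) \<in> mR M \<longrightarrow> v \<in> mWb M)"

definition lfp_on :: "'w set \<Rightarrow> ('w set \<Rightarrow> 'w set) \<Rightarrow> 'w set" where
  "lfp_on W F = \<Inter> {A. A \<subseteq> W \<and> F A \<subseteq> A}"

definition gfp_on :: "'w set \<Rightarrow> ('w set \<Rightarrow> 'w set) \<Rightarrow> 'w set" where
  "gfp_on W F = \<Union> {A. A \<subseteq> W \<and> A \<subseteq> F A}"

fun sem :: "('w, 'p, 'x) ck_struct_scheme \<Rightarrow> ('v \<Rightarrow> 'w set) \<Rightarrow> ('p, 'v) fm \<Rightarrow> 'w set" where
  "sem M \<rho> (Prop P) = mV M P"
| "sem M \<rho> (Var X) = \<rho> X"
| "sem M \<rho> Bot = mWb M"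
| "sem M \<rho> (And f g) = sem M \<rho> f \<inter> sem M \<rho> g"
| "sem M \<rho> (Or f g) = sem M \<rho> f \<union> sem M \<rho> g"
| "sem M \<rho> (Imp f g) =
     {w \<in> mW M. \<forall>v. (w, v) \<in> mLe M \<and> v \<in> sem M \<rho> f \<longrightarrow> v \<in> sem M \<rho> g}"
| "sem M \<rho> (Box f) =
     {w \<in> mW M. \<forall>u. (w, u) \<in> mLe M O mR M \<longrightarrow> u \<in> sem M \<rho> f}"
| "sem M \<rho> (Dia f) =
     {w \<in> mW M. \<forall>v. (w, v) \<in> mLe M \<longrightarrow> (\<exists>u. (v, u) \<in> mR M \<and> u \<in> sem M \<rho> f)}"
| "sem M \<rho> (Mu X f) = lfp_on (mW M) (\<lambda>A. sem M (\<rho>(X := A)) f)"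
| "sem M \<rho> (Nu X f) = gfp_on (mW M) (\<lambda>A. sem M (\<rho>(X := A)) f)"

text \<open>Satisfaction of a sentence (the variable assignment is irrelevant for sentences).\<close>
definition sat :: "('w, 'p, 'x) ck_struct_scheme \<Rightarrow> 'w \<Rightarrow> ('p, 'v) fm \<Rightarrow> bool" where
  "sat M w f \<longleftrightarrow> w \<in> sem M (\<lambda>_. {}) f"

datatype role = Verifier | Refuter

fun dual :: "role \<Rightarrow> role" where
  "dual Verifier = Refuter"
| "dual Refuter = Verifier"

datatype player = PI | PII

fun other :: "player \<Rightarrow> player" where
  "other PI = PII"
| "other PII = PI"

text \<open>Positions: GP v psi Q = <v,psi,Q>; GDia v psi Q = <v, hat-Dia psi, Q>;
  GImp v psi theta Q = <v, psi ? theta, Q>. Q is the current role of player I.\<close>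
datatype ('w, 'p, 'v) gpos =
    GP 'w "('p, 'v) fm" role
  | GDia 'w "('p, 'v) fm" role
  | GImp 'w "('p, 'v) fm" "('p, 'v) fm" role

fun role_I :: "('w, 'p, 'v) gpos \<Rightarrow> role" where
  "role_I (GP v f Q) = Q"
| "role_I (GDia v f Q) = Q"
| "role_I (GImp v f g Q) = Q"

fun owner_role :: "('w, 'p, 'x) ck_struct_scheme \<Rightarrow> ('p, 'v) fm \<Rightarrow> ('w, 'p, 'v) gpos \<Rightarrow> role" where
  "owner_role M \<phi> (GP v (Prop P) Q) = (if v \<in> mV M P then Refuter else Verifier)"
| "owner_role M \<phi> (GP v Bot Q) = (if v \<in> mWb M then Refuter else Verifier)"
| "owner_role M \<phi> (GP v (Var X) Q) = (if (\<exists>g. Mu X g \<in> Sub \<phi>) then Verifier else Refuter)"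
| "owner_role M \<phi> (GP v (Or f g) Q) = Verifier"
| "owner_role M \<phi> (GP v (Mu X f) Q) = Verifier"
| "owner_role M \<phi> (GP v (And f g) Q) = Refuter"
| "owner_role M \<phi> (GP v (Imp f g) Q) = Refuter"
| "owner_role M \<phi> (GP v (Box f) Q) = Refuter"
| "owner_role M \<phi> (GP v (Dia f) Q) = Refuter"
| "owner_role M \<phi> (GP v (Nu X f) Q) = Refuter"
| "owner_role M \<phi> (GDia v f Q) = Verifier"
| "owner_role M \<phi> (GImp v f g Q) = Verifier"

definition owner :: "('w, 'p, 'x) ck_struct_scheme \<Rightarrow> ('p, 'v) fm \<Rightarrow> ('w, 'p, 'v) gpos \<Rightarrow> player" where
  "owner M \<phi> p = (if owner_role M \<phi> p = role_I p then PI else PII)"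

fun moves :: "('w, 'p, 'x) ck_struct_scheme \<Rightarrow> ('p, 'v) fm \<Rightarrow> ('w, 'p, 'v) gpos \<Rightarrow> ('w, 'p, 'v) gpos set" where
  "moves M \<phi> (GP v (Prop P) Q) = {}"
| "moves M \<phi> (GP v Bot Q) = {}"
| "moves M \<phi> (GP v (Var X) Q) =
     {GP v F Q | F. F \<in> Sub \<phi> \<and> (\<exists>g. F = Mu X g \<or> F = Nu X g)}"
| "moves M \<phi> (GP v (Or f g) Q) = {GP v f Q, GP v g Q}"
| "moves M \<phi> (GP v (And f g) Q) = {GP v f Q, GP v g Q}"
| "moves M \<phi> (GP v (Imp f g) Q) = {GImp u f g Q | u. (v, u) \<in> mLe M}"
| "moves M \<phi> (GP v (Box f) Q) = {GP u f Q | u. (v, u) \<in> mLe M O mR M}"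
| "moves M \<phi> (GP v (Dia f) Q) = {GDia u f Q | u. (v, u) \<in> mLe M}"
| "moves M \<phi> (GP v (Mu X f) Q) = {GP v f Q}"
| "moves M \<phi> (GP v (Nu X f) Q) = {GP v f Q}"
| "moves M \<phi> (GDia v f Q) = {GP u f Q | u. (v, u) \<in> mR M}"
| "moves M \<phi> (GImp v f g Q) = {GP v f (dual Q), GP v g Q}"

definition init_pos :: "'w \<Rightarrow> ('p, 'v) fm \<Rightarrow> ('w, 'p, 'v) gpos" where
  "init_pos w \<phi> = GP w \<phi> Verifier"

definition reachable :: "('w, 'p, 'x) ck_struct_scheme \<Rightarrow> 'w \<Rightarrow> ('p, 'v) fm \<Rightarrow> ('w, 'p, 'v) gpos \<Rightarrow> bool" where
  "reachable M w \<phi> p \<longleftrightarrow> (init_pos w \<phi>, p) \<in> {(a, b). b \<in> moves M \<phi> a}\<^sup>*"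

definition fin_run :: "('w, 'p, 'x) ck_struct_scheme \<Rightarrow> 'w \<Rightarrow> ('p, 'v) fm \<Rightarrow> ('w, 'p, 'v) gpos list \<Rightarrow> bool" where
  "fin_run M w \<phi> ps \<longleftrightarrow> ps \<noteq> [] \<and> hd ps = init_pos w \<phi> \<and>
     (\<forall>i. Suc i < length ps \<longrightarrow> ps ! Suc i \<in> moves M \<phi> (ps ! i)) \<and>
     moves M \<phi> (last ps) = {}"

definition inf_run :: "('w, 'p, 'x) ck_struct_scheme \<Rightarrow> 'w \<Rightarrow> ('p, 'v) fm \<Rightarrow> (nat \<Rightarrow> ('w, 'p, 'v) gpos) \<Rightarrow> bool" where
  "inf_run M w \<phi> r \<longleftrightarrow> r 0 = init_pos w \<phi> \<and> (\<forall>n. r (Suc n) \<in> moves M \<phi> (r n))"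

definition inf_regen :: "(nat \<Rightarrow> ('w, 'p, 'v) gpos) \<Rightarrow> ('p, 'v) fm \<Rightarrow> bool" where
  "inf_regen r F \<longleftrightarrow>
     infinite {n. \<exists>v X Q. r n = GP v (Var X) Q \<and> r (Suc n) = GP v F Q}"

definition owned_by_I :: "('w, 'p, 'x) ck_struct_scheme \<Rightarrow> 'w \<Rightarrow> ('p, 'v) fm \<Rightarrow> ('p, 'v) fm \<Rightarrow> bool" where
  "owned_by_I M w \<phi> F \<longleftrightarrow>
     (\<exists>v Q. reachable M w \<phi> (GP v F Q) \<and>
        ((Q = Verifier \<and> (\<exists>X g. F = Nu X g)) \<or> (Q = Refuter \<and> (\<exists>X g. F = Mu X g))))"

definition fin_winner :: "('w, 'p, 'x) ck_struct_scheme \<Rightarrow> ('p, 'v) fm \<Rightarrow> ('w, 'p, 'v) gpos list \<Rightarrow> player" where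
  "fin_winner M \<phi> ps = other (owner M \<phi> (last ps))"

definition inf_winner :: "('w, 'p, 'x) ck_struct_scheme \<Rightarrow> 'w \<Rightarrow> ('p, 'v) fm \<Rightarrow> (nat \<Rightarrow> ('w, 'p, 'v) gpos) \<Rightarrow> player" where
  "inf_winner M w \<phi> r =
     (if \<exists>F. inf_regen r F \<and> (\<forall>G. inf_regen r G \<longrightarrow> G \<in> Sub F) \<and> owned_by_I M w \<phi> F
      then PI else PII)"

definition strategy :: "('w, 'p, 'x) ck_struct_scheme \<Rightarrow> ('p, 'v) fm \<Rightarrow> player \<Rightarrow> (('w, 'p, 'v) gpos \<Rightarrow> ('w, 'p, 'v) gpos) \<Rightarrow> bool" where
  "strategy M \<phi> pl \<sigma> \<longleftrightarrow>
     (\<forall>p. owner M \<phi> p = pl \<and> moves M \<phi> p \<noteq> {} \<longrightarrow> \<sigma> p \<in> moves M \<phi> p)"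

definition fin_follows :: "('w, 'p, 'x) ck_struct_scheme \<Rightarrow> ('p, 'v) fm \<Rightarrow> player \<Rightarrow> (('w, 'p, 'v) gpos \<Rightarrow> ('w, 'p, 'v) gpos) \<Rightarrow> ('w, 'p, 'v) gpos list \<Rightarrow> bool" where
  "fin_follows M \<phi> pl \<sigma> ps \<longleftrightarrow>
     (\<forall>i. Suc i < length ps \<and> owner M \<phi> (ps ! i) = pl \<longrightarrow> ps ! Suc i = \<sigma> (ps ! i))"

definition inf_follows :: "('w, 'p, 'x) ck_struct_scheme \<Rightarrow> ('p, 'v) fm \<Rightarrow> player \<Rightarrow> (('w, 'p, 'v) gpos \<Rightarrow> ('w, 'p, 'v) gpos) \<Rightarrow> (nat \<Rightarrow> ('w, 'p, 'v) gpos) \<Rightarrow> bool" where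
  "inf_follows M \<phi> pl \<sigma> r \<longleftrightarrow>
     (\<forall>n. owner M \<phi> (r n) = pl \<longrightarrow> r (Suc n) = \<sigma> (r n))"

definition winning_strategy :: "('w, 'p, 'x) ck_struct_scheme \<Rightarrow> 'w \<Rightarrow> ('p, 'v) fm \<Rightarrow> player \<Rightarrow> (('w, 'p, 'v) gpos \<Rightarrow> ('w, 'p, 'v) gpos) \<Rightarrow> bool" where
  "winning_strategy M w \<phi> pl \<sigma> \<longleftrightarrow>
     strategy M \<phi> pl \<sigma> \<and>
     (\<forall>ps. fin_run M w \<phi> ps \<and> fin_follows M \<phi> pl \<sigma> ps \<longrightarrow> fin_winner M \<phi> ps = pl) \<and>
     (\<forall>r. inf_run M w \<phi> r \<and> inf_follows M \<phi> pl \<sigma> r \<longrightarrow> inf_winner M w \<phi> r = pl)"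

definition has_winning_strategy :: "('w, 'p, 'x) ck_struct_scheme \<Rightarrow> 'w \<Rightarrow> ('p, 'v) fm \<Rightarrow> player \<Rightarrow> bool" where
  "has_winning_strategy M w \<phi> pl \<longleftrightarrow>
     (\<exists>\<sigma> :: ('w, 'p, 'v) gpos \<Rightarrow> ('w, 'p, 'v) gpos. winning_strategy M w \<phi> pl \<sigma>)"

end

theory Submission
  imports Defs
begin

lemma Sub_refl[simp]: "\<psi> \<in> Sub \<psi>"
  by (cases \<psi>) auto

lemma Sub_trans: "\<psi> \<in> Sub \<chi> \<Longrightarrow> \<chi> \<in> Sub \<theta> \<Longrightarrow> \<psi> \<in> Sub \<theta>"
  by (induction \<theta>) auto

lemma Sub_size: "\<psi> \<in> Sub \<chi> \<Longrightarrow> size \<psi> \<le> size \<chi>"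
  by (induction \<chi>) auto

lemma Sub_size_less: "\<psi> \<in> Sub \<chi> \<Longrightarrow> \<psi> \<noteq> \<chi> \<Longrightarrow> size \<psi> < size \<chi>"
  by (induction \<chi>) (auto dest: Sub_size)

lemma finite_Sub: "finite (Sub \<chi>)"
  by (induction \<chi>) auto

lemma fv_Sub: "Y \<in> free_vars \<psi> \<Longrightarrow> Var Y \<in> Sub \<psi>"
  by (induction \<psi>) auto

lemma bc_Sub: "\<psi> \<in> Sub \<chi> \<Longrightarrow> binder_count X \<psi> \<le> binder_count X \<chi>"
  by (induction \<chi>) auto

lemma bc_pos: "Mu X g \<in> Sub \<chi> \<or> Nu X g \<in> Sub \<chi> \<Longrightarrow> binder_count X \<chi> \<ge> 1"
  by (induction \<chi>) auto

definition isbind :: "'v \<Rightarrow> ('p,'v) fm \<Rightarrow> bool" where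
  "isbind X F \<longleftrightarrow> (\<exists>g. F = Mu X g \<or> F = Nu X g)"

lemma bc_pos': "isbind X F \<Longrightarrow> F \<in> Sub \<chi> \<Longrightarrow> binder_count X \<chi> \<ge> 1"
  unfolding isbind_def by (metis bc_pos)

lemma isbind_simps[simp]:
  "\<not> isbind X (Prop P)" "\<not> isbind X Bot" "\<not> isbind X (Var Y)" "\<not> isbind X (And f g)"
  "\<not> isbind X (Or f g)" "\<not> isbind X (Imp f g)" "\<not> isbind X (Box f)" "\<not> isbind X (Dia f)"
  "isbind X (Mu Y f) = (Y = X)" "isbind X (Nu Y f) = (Y = X)"
  by (auto simp: isbind_def)

lemma binder_two:
  "isbind X F1 \<Longrightarrow> isbind X F2 \<Longrightarrow> F1 \<in> Sub \<chi> \<Longrightarrow> F2 \<in> Sub \<chi> \<Longrightarrow> F1 \<noteq> F2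
   \<Longrightarrow> binder_count X \<chi> \<ge> 2"
proof (induction \<chi>)
  case (And f g)
  have "F1 \<in> Sub f \<or> F1 \<in> Sub g" "F2 \<in> Sub f \<or> F2 \<in> Sub g" using And.prems by auto
  then show ?case using And bc_pos'[of X F1] bc_pos'[of X F2] by fastforce
next
  case (Or f g)
  have "F1 \<in> Sub f \<or> F1 \<in> Sub g" "F2 \<in> Sub f \<or> F2 \<in> Sub g" using Or.prems by auto
  then show ?case using Or bc_pos'[of X F1] bc_pos'[of X F2] by fastforce
next
  case (Imp f g)
  have "F1 \<in> Sub f \<or> F1 \<in> Sub g" "F2 \<in> Sub f \<or> F2 \<in> Sub g" using Imp.prems by auto
  then show ?case using Imp bc_pos'[of X F1] bc_pos'[of X F2] by fastforce
next
  case (Mu Y f)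
  show ?case
  proof (cases "F1 = Mu Y f \<or> F2 = Mu Y f")
    case True
    then have "Y = X" using Mu.prems by auto
    moreover have "F1 \<in> Sub f \<or> F2 \<in> Sub f" using True Mu.prems by auto
    ultimately show ?thesis using bc_pos'[of X F1 f] bc_pos'[of X F2 f] Mu.prems by auto
  next
    case False
    then show ?thesis using Mu by auto
  qed
next
  case (Nu Y f)
  show ?case
  proof (cases "F1 = Nu Y f \<or> F2 = Nu Y f")
    case True
    then have "Y = X" using Nu.prems by auto
    moreover have "F1 \<in> Sub f \<or> F2 \<in> Sub f" using True Nu.prems by auto
    ultimately show ?thesis using bc_pos'[of X F1 f] bc_pos'[of X F2 f] Nu.prems by auto
  next
    case False
    then show ?thesis using Nu by auto
  qed
qed auto

lemma binder_above:
  "\<psi> \<in> Sub \<chi> \<Longrightarrow> Y \<in> free_vars \<psi> \<Longrightarrow> Y \<notin> free_vars \<chi> \<Longrightarrow>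
   \<exists>h. (Mu Y h \<in> Sub \<chi> \<or> Nu Y h \<in> Sub \<chi>) \<and> \<psi> \<in> Sub h"
proof (induction \<chi>)
  case (Mu X f)
  show ?case
  proof (cases "\<psi> = Mu X f")
    case True then show ?thesis using Mu by auto
  next
    case False
    then have "\<psi> \<in> Sub f" using Mu by auto
    show ?thesis
    proof (cases "Y \<in> free_vars f")
      case True
      then have "Y = X" using Mu by auto
      then show ?thesis using \<open>\<psi> \<in> Sub f\<close> by auto
    next
      case False
      then show ?thesis using Mu \<open>\<psi> \<in> Sub f\<close> by auto
    qed
  qed
next
  case (Nu X f)
  show ?case
  proof (cases "\<psi> = Nu X f")
    case True then show ?thesis using Nu by auto
  next
    case False
    then have "\<psi> \<in> Sub f" using Nu by auto
    show ?thesis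
    proof (cases "Y \<in> free_vars f")
      case True
      then have "Y = X" using Nu by auto
      then show ?thesis using \<open>\<psi> \<in> Sub f\<close> by auto
    next
      case False
      then show ?thesis using Nu \<open>\<psi> \<in> Sub f\<close> by auto
    qed
  qed
qed auto

lemma occurs_Sub: "occurs X h \<longleftrightarrow> Var X \<in> Sub h"
  by (induction h) auto

lemma occurs_bound_Sub: "(Mu X h \<in> Sub \<chi> \<or> Nu X h \<in> Sub \<chi>) \<Longrightarrow> occurs X h \<Longrightarrow> occurs_bound X \<chi>"
  by (induction \<chi>) auto

section \<open>Occurrences with parity\<close>

fun occ :: "('p,'v) fm \<Rightarrow> ('p,'v) fm \<Rightarrow> bool \<Rightarrow> bool" where
  "occ (Prop P) \<psi> b = (\<psi> = Prop P \<and> b)"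
| "occ Bot \<psi> b = (\<psi> = Bot \<and> b)"
| "occ (Var X) \<psi> b = (\<psi> = Var X \<and> b)"
| "occ (And f g) \<psi> b = ((\<psi> = And f g \<and> b) \<or> occ f \<psi> b \<or> occ g \<psi> b)"
| "occ (Or f g) \<psi> b = ((\<psi> = Or f g \<and> b) \<or> occ f \<psi> b \<or> occ g \<psi> b)"
| "occ (Imp f g) \<psi> b = ((\<psi> = Imp f g \<and> b) \<or> occ f \<psi> (\<not> b) \<or> occ g \<psi> b)"
| "occ (Box f) \<psi> b = ((\<psi> = Box f \<and> b) \<or> occ f \<psi> b)"
| "occ (Dia f) \<psi> b = ((\<psi> = Dia f \<and> b) \<or> occ f \<psi> b)"
| "occ (Mu X f) \<psi> b = ((\<psi> = Mu X f \<and> b) \<or> occ f \<psi> b)"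
| "occ (Nu X f) \<psi> b = ((\<psi> = Nu X f \<and> b) \<or> occ f \<psi> b)"

lemma occ_self: "occ \<chi> \<chi> True"
  by (cases \<chi>) auto

lemma occ_trans: "occ \<chi> \<psi> b \<Longrightarrow> occ \<psi> \<theta> c \<Longrightarrow> occ \<chi> \<theta> (b = c)"
proof (induction \<chi> arbitrary: b)
  case (Imp f g)
  show ?case
  proof (cases "\<psi> = Imp f g \<and> b")
    case True then show ?thesis using Imp by simp
  next
    case False
    then have "occ f \<psi> (\<not> b) \<or> occ g \<psi> b" using Imp.prems by auto
    then show ?thesis
    proof
      assume "occ f \<psi> (\<not> b)"
      then have "occ f \<theta> ((\<not> b) = c)" using Imp.IH(1) Imp.prems by blast
      then show ?thesis by (cases b; cases c; simp)
    next
      assume "occ g \<psi> b"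
      then show ?thesis using Imp by auto
    qed
  qed
qed auto

lemma occ_Sub: "occ \<chi> \<psi> b \<Longrightarrow> \<psi> \<in> Sub \<chi>"
  by (induction \<chi> arbitrary: b) auto

lemma Sub_occ: "\<psi> \<in> Sub \<chi> \<Longrightarrow> \<exists>b. occ \<chi> \<psi> b"
proof (induction \<chi>)
  case (Imp f g)
  show ?case
  proof (cases "\<psi> = Imp f g")
    case True then show ?thesis by auto
  next
    case False
    then have "\<psi> \<in> Sub f \<or> \<psi> \<in> Sub g" using Imp.prems by auto
    then show ?thesis
    proof
      assume "\<psi> \<in> Sub f"
      then obtain b where "occ f \<psi> b" using Imp.IH by blast
      then have "occ (Imp f g) \<psi> (\<not> b)" by simp
      then show ?thesis by blast
    next
      assume "\<psi> \<in> Sub g"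
      then obtain b where "occ g \<psi> b" using Imp.IH by blast
      then have "occ (Imp f g) \<psi> b" by simp
      then show ?thesis by blast
    qed
  qed
next
  case (And f g)
  show ?case
  proof (cases "\<psi> = And f g")
    case True then show ?thesis by auto
  next
    case False
    then have "\<psi> \<in> Sub f \<or> \<psi> \<in> Sub g" using And.prems by auto
    then show ?thesis
    proof
      assume "\<psi> \<in> Sub f"
      then obtain b where "occ f \<psi> b" using And.IH by blast
      then have "occ (And f g) \<psi> b" by simp
      then show ?thesis by blast
    next
      assume "\<psi> \<in> Sub g"
      then obtain b where "occ g \<psi> b" using And.IH by blast
      then have "occ (And f g) \<psi> b" by simp
      then show ?thesis by blast
    qed
  qed
next
  case (Or f g)
  show ?case
  proof (cases "\<psi> = Or f g")
    case True then show ?thesis by auto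
  next
    case False
    then have "\<psi> \<in> Sub f \<or> \<psi> \<in> Sub g" using Or.prems by auto
    then show ?thesis
    proof
      assume "\<psi> \<in> Sub f"
      then obtain b where "occ f \<psi> b" using Or.IH by blast
      then have "occ (Or f g) \<psi> b" by simp
      then show ?thesis by blast
    next
      assume "\<psi> \<in> Sub g"
      then obtain b where "occ g \<psi> b" using Or.IH by blast
      then have "occ (Or f g) \<psi> b" by simp
      then show ?thesis by blast
    qed
  qed
next
  case (Box f)
  show ?case
  proof (cases "\<psi> = Box f")
    case True then show ?thesis by auto
  next
    case False
    then have "\<psi> \<in> Sub f" using Box.prems by auto
    then obtain b where "occ f \<psi> b" using Box.IH by blast
    then have "occ (Box f) \<psi> b" by simp
    then show ?thesis by blast
  qed
next
  case (Dia f)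
  show ?case
  proof (cases "\<psi> = Dia f")
    case True then show ?thesis by auto
  next
    case False
    then have "\<psi> \<in> Sub f" using Dia.prems by auto
    then obtain b where "occ f \<psi> b" using Dia.IH by blast
    then have "occ (Dia f) \<psi> b" by simp
    then show ?thesis by blast
  qed
next
  case (Mu Y f)
  show ?case
  proof (cases "\<psi> = Mu Y f")
    case True then show ?thesis by auto
  next
    case False
    then have "\<psi> \<in> Sub f" using Mu.prems by auto
    then obtain b where "occ f \<psi> b" using Mu.IH by blast
    then have "occ (Mu Y f) \<psi> b" by simp
    then show ?thesis by blast
  qed
next
  case (Nu Y f)
  show ?case
  proof (cases "\<psi> = Nu Y f")
    case True then show ?thesis by auto
  next
    case False
    then have "\<psi> \<in> Sub f" using Nu.prems by auto
    then obtain b where "occ f \<psi> b" using Nu.IH by blast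
    then have "occ (Nu Y f) \<psi> b" by simp
    then show ?thesis by blast
  qed
qed auto

lemma occ_self_True: "occ \<chi> \<chi> b \<Longrightarrow> b"
  by (cases \<chi>) (auto dest!: occ_Sub Sub_size)

lemma occ_parity_two:
  "isbind X F \<Longrightarrow> occ \<chi> F c1 \<Longrightarrow> occ \<chi> F c2 \<Longrightarrow> c1 \<noteq> c2 \<Longrightarrow> binder_count X \<chi> \<ge> 2"
proof (induction \<chi> arbitrary: c1 c2)
  case (And f g)
  have bf: "1 \<le> binder_count X f" if "occ f F c" for c using bc_pos'[OF And.prems(1) occ_Sub[OF that]] .
  have bg: "1 \<le> binder_count X g" if "occ g F c" for c using bc_pos'[OF And.prems(1) occ_Sub[OF that]] .
  have "F \<noteq> And f g" using And by auto
  then have "(occ f F c1 \<or> occ g F c1) \<and> (occ f F c2 \<or> occ g F c2)" using And.prems by auto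
  then show ?case
  proof (elim conjE disjE)
    assume "occ f F c1" "occ f F c2" then show ?thesis using And.IH(1)[OF And.prems(1) _ _ And.prems(4)] by fastforce
  next
    assume "occ g F c1" "occ g F c2" then show ?thesis using And.IH(2)[OF And.prems(1) _ _ And.prems(4)] by fastforce
  next
    assume "occ f F c1" "occ g F c2" then show ?thesis using bf bg by fastforce
  next
    assume "occ g F c1" "occ f F c2" then show ?thesis using bf bg by fastforce
  qed
next
  case (Or f g)
  have bf: "1 \<le> binder_count X f" if "occ f F c" for c using bc_pos'[OF Or.prems(1) occ_Sub[OF that]] .
  have bg: "1 \<le> binder_count X g" if "occ g F c" for c using bc_pos'[OF Or.prems(1) occ_Sub[OF that]] .
  have "F \<noteq> Or f g" using Or by auto
  then have "(occ f F c1 \<or> occ g F c1) \<and> (occ f F c2 \<or> occ g F c2)" using Or.prems by auto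
  then show ?case
  proof (elim conjE disjE)
    assume "occ f F c1" "occ f F c2" then show ?thesis using Or.IH(1)[OF Or.prems(1) _ _ Or.prems(4)] by fastforce
  next
    assume "occ g F c1" "occ g F c2" then show ?thesis using Or.IH(2)[OF Or.prems(1) _ _ Or.prems(4)] by fastforce
  next
    assume "occ f F c1" "occ g F c2" then show ?thesis using bf bg by fastforce
  next
    assume "occ g F c1" "occ f F c2" then show ?thesis using bf bg by fastforce
  qed
next
  case (Imp f g)
  have bf: "1 \<le> binder_count X f" if "occ f F c" for c using bc_pos'[OF Imp.prems(1) occ_Sub[OF that]] .
  have bg: "1 \<le> binder_count X g" if "occ g F c" for c using bc_pos'[OF Imp.prems(1) occ_Sub[OF that]] .
  have "F \<noteq> Imp f g" using Imp by auto
  then have "(occ f F (\<not>c1) \<or> occ g F c1) \<and> (occ f F (\<not>c2) \<or> occ g F c2)" using Imp.prems by auto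
  moreover have ne: "(\<not>c1) \<noteq> (\<not>c2)" using Imp.prems by auto
  ultimately show ?case
  proof (elim conjE disjE)
    assume "occ f F (\<not>c1)" "occ f F (\<not>c2)" then show ?thesis using Imp.IH(1)[OF Imp.prems(1) _ _ ne] by fastforce
  next
    assume "occ g F c1" "occ g F c2" then show ?thesis using Imp.IH(2)[OF Imp.prems(1) _ _ Imp.prems(4)] by fastforce
  next
    assume "occ f F (\<not>c1)" "occ g F c2" then show ?thesis using bf bg by fastforce
  next
    assume "occ g F c1" "occ f F (\<not>c2)" then show ?thesis using bf bg by fastforce
  qed
next
  case (Box f)
  then show ?case by auto
next
  case (Dia f)
  then show ?case by auto
next
  case (Mu Y f)
  show ?case
  proof (cases "F = Mu Y f")
    case True
    then have "occ f F c1 \<or> occ f F c2" using Mu.prems by auto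
    then have False using True by (auto dest!: occ_Sub Sub_size)
    then show ?thesis ..
  next
    case False
    then have "occ f F c1" "occ f F c2" using Mu.prems by auto
    then show ?thesis using Mu.IH Mu.prems by fastforce
  qed
next
  case (Nu Y f)
  show ?case
  proof (cases "F = Nu Y f")
    case True
    then have "occ f F c1 \<or> occ f F c2" using Nu.prems by auto
    then have False using True by (auto dest!: occ_Sub Sub_size)
    then show ?thesis ..
  next
    case False
    then have "occ f F c1" "occ f F c2" using Nu.prems by auto
    then show ?thesis using Nu.IH Nu.prems by fastforce
  qed
qed auto

lemma occ_var_binder:
  "occ \<chi> (Var X) b \<Longrightarrow> X \<notin> free_vars \<chi> \<Longrightarrow>
   \<exists>g c b'. (Mu X g \<in> Sub \<chi> \<or> Nu X g \<in> Sub \<chi>) \<and> (occ \<chi> (Mu X g) c \<or> occ \<chi> (Nu X g) c)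
       \<and> occ g (Var X) b' \<and> b = (c = b')"
proof (induction \<chi> arbitrary: b)
  case (And f g)
  then show ?case by auto blast+
next
  case (Or f g)
  then show ?case by auto blast+
next
  case (Imp f g)
  show ?case
  proof (cases "occ f (Var X) (\<not> b)")
    case True
    have "X \<notin> free_vars f" using Imp.prems by auto
    from Imp.IH(1)[OF True this] obtain h c b' where "(Mu X h \<in> Sub f \<or> Nu X h \<in> Sub f)"
      "(occ f (Mu X h) c \<or> occ f (Nu X h) c)" "occ h (Var X) b'" "(\<not> b) = (c = b')" by blast
    then show ?thesis by (rule_tac x=h in exI, rule_tac x="\<not> c" in exI) auto
  next
    case False
    with Imp show ?thesis by auto blast
  qed
next
  case (Box f)
  then show ?case by auto
next
  case (Dia f)
  then show ?case by auto
next
  case (Mu Y f)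
  have o: "occ f (Var X) b" using Mu.prems by auto
  show ?case
  proof (cases "Y = X")
    case True
    then show ?thesis using o occ_self[of "Mu Y f"] by (intro exI[of _ f] exI[of _ True] exI[of _ b]) auto
  next
    case False
    then have "X \<notin> free_vars f" using Mu.prems by auto
    from Mu.IH[OF o this] obtain g c b' where "(Mu X g \<in> Sub f \<or> Nu X g \<in> Sub f)"
      "(occ f (Mu X g) c \<or> occ f (Nu X g) c)" "occ g (Var X) b'" "b = (c = b')" by blast
    then show ?thesis by (intro exI[of _ g] exI[of _ c] exI[of _ b']) auto
  qed
next
  case (Nu Y f)
  have o: "occ f (Var X) b" using Nu.prems by auto
  show ?case
  proof (cases "Y = X")
    case True
    then show ?thesis using o occ_self[of "Nu Y f"] by (intro exI[of _ f] exI[of _ True] exI[of _ b]) auto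
  next
    case False
    then have "X \<notin> free_vars f" using Nu.prems by auto
    from Nu.IH[OF o this] obtain g c b' where "(Mu X g \<in> Sub f \<or> Nu X g \<in> Sub f)"
      "(occ f (Mu X g) c \<or> occ f (Nu X g) c)" "occ g (Var X) b'" "b = (c = b')" by blast
    then show ?thesis by (intro exI[of _ g] exI[of _ c] exI[of _ b']) auto
  qed
qed auto

lemma polar_occ:
  "polar X s h \<Longrightarrow> occ h (Var X) b \<Longrightarrow> binder_count X h = 0 \<Longrightarrow> b = s"
  by (induction h arbitrary: s b) (auto split: if_splits)

lemma mu_formula_Sub: "\<psi> \<in> Sub \<chi> \<Longrightarrow> mu_formula \<chi> \<Longrightarrow> mu_formula \<psi>"
  by (induction \<chi>) auto


fun bdy :: "('p,'v) fm \<Rightarrow> ('p,'v) fm" where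
  "bdy (Mu X g) = g"
| "bdy (Nu X g) = g"
| "bdy _ = Bot"

locale setting =
  fixes M :: "('w, 'p) ck_struct" and w :: 'w and \<phi> :: "('p, 'v) fm"
  assumes ck: "ck_model M" and w_in: "w \<in> mW M"
    and mu: "mu_formula \<phi>" and sen: "sentence \<phi>" and wn: "well_named \<phi>"
begin

definition V0 :: "'v set" where "V0 = {Y. Var Y \<in> Sub \<phi>}"

definition B :: "'v \<Rightarrow> ('p,'v) fm" where
  "B Y = (THE F. F \<in> Sub \<phi> \<and> isbind Y F)"

lemma fv_phi: "free_vars \<phi> = {}"
  using sen by (simp add: sentence_def)

lemma V0_binder: "Y \<in> V0 \<Longrightarrow> \<exists>h. (Mu Y h \<in> Sub \<phi> \<or> Nu Y h \<in> Sub \<phi>) \<and> Var Y \<in> Sub h"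
  using binder_above[of "Var Y" \<phi> Y] fv_phi unfolding V0_def by auto

lemma V0_bc: "Y \<in> V0 \<Longrightarrow> binder_count Y \<phi> = 1"
proof -
  assume "Y \<in> V0"
  then obtain h where "(Mu Y h \<in> Sub \<phi> \<or> Nu Y h \<in> Sub \<phi>)" "Var Y \<in> Sub h" using V0_binder by blast
  then have "occurs_bound Y \<phi>" using occurs_bound_Sub occurs_Sub by metis
  then show ?thesis using wn unfolding well_named_def well_bounded_def by blast
qed

lemma binder_uniq: "Y \<in> V0 \<Longrightarrow> F1 \<in> Sub \<phi> \<Longrightarrow> F2 \<in> Sub \<phi> \<Longrightarrow> isbind Y F1 \<Longrightarrow> isbind Y F2 \<Longrightarrow> F1 = F2"
  using binder_two[of Y F1 F2 \<phi>] V0_bc by fastforce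

lemma B_props: assumes "Y \<in> V0"
  shows "B Y \<in> Sub \<phi>" "isbind Y (B Y)" "Var Y \<in> Sub (bdy (B Y))"
proof -
  obtain h where h: "(Mu Y h \<in> Sub \<phi> \<or> Nu Y h \<in> Sub \<phi>)" "Var Y \<in> Sub h" using V0_binder assms by blast
  then obtain F where F: "F \<in> Sub \<phi>" "isbind Y F" "bdy F = h" by (auto simp: isbind_def)
  have "B Y = F" unfolding B_def
    by (rule the_equality) (use F binder_uniq assms in auto)
  then show "B Y \<in> Sub \<phi>" "isbind Y (B Y)" "Var Y \<in> Sub (bdy (B Y))" using F h by auto
qed

lemma B_eq: "Y \<in> V0 \<Longrightarrow> F \<in> Sub \<phi> \<Longrightarrow> isbind Y F \<Longrightarrow> B Y = F"
  using B_props binder_uniq by blast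

lemma isbind_cases: "isbind Y F \<Longrightarrow> (F = Mu Y (bdy F) \<Longrightarrow> P) \<Longrightarrow> (F = Nu Y (bdy F) \<Longrightarrow> P) \<Longrightarrow> P"
  by (auto simp: isbind_def)

lemma isbind_bc: "isbind Y F \<Longrightarrow> binder_count Y F = 1 + binder_count Y (bdy F)"
  by (auto simp: isbind_def)

lemma isbind_size: "isbind Y F \<Longrightarrow> size (bdy F) < size F"
  by (auto simp: isbind_def)

lemma B_form: "Y \<in> V0 \<Longrightarrow> B Y = Mu Y (bdy (B Y)) \<or> B Y = Nu Y (bdy (B Y))"
proof -
  assume "Y \<in> V0"
  then obtain g where "B Y = Mu Y g \<or> B Y = Nu Y g" using B_props(2) unfolding isbind_def by blast
  then show ?thesis by auto
qed

lemma bc_bdy: assumes "Y \<in> V0" shows "binder_count Y (bdy (B Y)) = 0"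
proof -
  have "binder_count Y (B Y) \<le> 1" using bc_Sub[OF B_props(1)[OF assms], of Y] V0_bc[OF assms] by simp
  moreover have "binder_count Y (B Y) = 1 + binder_count Y (bdy (B Y))"
    using isbind_bc[OF B_props(2)[OF assms]] .
  ultimately show ?thesis by simp
qed

lemma bdy_Sub: "isbind Y F \<Longrightarrow> bdy F \<in> Sub F"
  by (auto simp: isbind_def)

lemma B_size: "Y \<in> V0 \<Longrightarrow> size (bdy (B Y)) < size (B Y)"
  by (rule isbind_size[OF B_props(2)])

lemma fv_bdy: "isbind Z F \<Longrightarrow> free_vars (bdy F) \<subseteq> free_vars F \<union> {Z}"
  by (auto simp: isbind_def)

lemma Sub_fv_V0: "\<psi> \<in> Sub \<phi> \<Longrightarrow> free_vars \<psi> \<subseteq> V0"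
proof
  fix Y assume "\<psi> \<in> Sub \<phi>" "Y \<in> free_vars \<psi>"
  then show "Y \<in> V0" unfolding V0_def using fv_Sub[of Y \<psi>] Sub_trans[of "Var Y" \<psi> \<phi>] by simp
qed

lemma free_outside:
  assumes "F \<in> Sub \<phi>" "Y \<in> free_vars F"
  shows "Y \<in> V0" "F \<in> Sub (bdy (B Y))" "size F < size (B Y)"
proof -
  show Y: "Y \<in> V0" using Sub_fv_V0 assms by blast
  obtain h where h: "(Mu Y h \<in> Sub \<phi> \<or> Nu Y h \<in> Sub \<phi>)" "F \<in> Sub h"
    using binder_above[OF assms(1,2)] fv_phi by blast
  then obtain G where G: "G \<in> Sub \<phi>" "isbind Y G" "bdy G = h" by (auto simp: isbind_def)
  then have "B Y = G" using B_eq Y by blast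
  then show "F \<in> Sub (bdy (B Y))" using G h by simp
  then show "size F < size (B Y)" using B_size[OF Y] Sub_size by fastforce
qed

lemma fv_B_size: "Z \<in> V0 \<Longrightarrow> Y \<in> free_vars (B Z) \<Longrightarrow> Y \<in> V0 \<and> size (B Z) < size (B Y)"
  using free_outside B_props by blast

lemma exit_size:
  assumes "F \<in> Sub \<phi>" "Var Y \<in> Sub F" "B Y \<notin> Sub F"
  shows "size F < size (B Y)"
proof (cases "Y \<in> free_vars F")
  case True then show ?thesis using free_outside assms by blast
next
  case False
  obtain h where h: "(Mu Y h \<in> Sub F \<or> Nu Y h \<in> Sub F)" "Var Y \<in> Sub h"
    using binder_above[OF assms(2) _ False] by auto
  then obtain G where G: "G \<in> Sub F" "isbind Y G" by (auto simp: isbind_def)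
  have Y: "Y \<in> V0" using assms Sub_trans unfolding V0_def by blast
  have "B Y = G" using B_eq[OF Y Sub_trans[OF G(1) assms(1)] G(2)] .
  then show ?thesis using G assms by simp
qed

lemma pos_bdy: "Y \<in> V0 \<Longrightarrow> polar Y True (bdy (B Y))"
  using mu_formula_Sub[OF B_props(1) mu] B_form by (metis mu_formula.simps(9,10))

lemma parity_B_uniq: "Y \<in> V0 \<Longrightarrow> occ \<phi> (B Y) c1 \<Longrightarrow> occ \<phi> (B Y) c2 \<Longrightarrow> c1 = c2"
  using occ_parity_two[of Y "B Y" \<phi> c1 c2] B_props V0_bc by fastforce

lemma parity_var:
  assumes "occ \<phi> (Var X) b" "occ \<phi> (B X) c"
  shows "b = c"
proof -
  have X: "X \<in> V0" using occ_Sub assms(1) unfolding V0_def by blast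
  obtain g c' b' where g: "(Mu X g \<in> Sub \<phi> \<or> Nu X g \<in> Sub \<phi>)" "(occ \<phi> (Mu X g) c' \<or> occ \<phi> (Nu X g) c')"
    "occ g (Var X) b'" "b = (c' = b')"
    using occ_var_binder[OF assms(1)] fv_phi by blast
  obtain G where G: "isbind X G" "bdy G = g" "occ \<phi> G c'" using g(2)
    by (metis bdy.simps(1,2) isbind_simps(9,10))
  have GS: "G \<in> Sub \<phi>" using G occ_Sub by blast
  have BG: "B X = G" using B_eq X G GS by blast
  have "b' = True" using polar_occ[of X True g b'] pos_bdy[OF X] bc_bdy[OF X] BG G g by simp
  moreover have "c' = c" using parity_B_uniq[OF X] G BG assms(2) by simp
  ultimately show ?thesis using g by simp
qed

end


lemma sem_fv: "(\<forall>Y\<in>free_vars \<psi>. \<rho> Y = \<rho>' Y) \<Longrightarrow> sem M \<rho> \<psi> = sem M \<rho>' \<psi>"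
proof (induction \<psi> arbitrary: \<rho> \<rho>')
  case (Mu X f)
  have "\<And>A. sem M (\<rho>(X := A)) f = sem M (\<rho>'(X := A)) f"
    using Mu by (intro Mu.IH) auto
  then show ?case by simp
next
  case (Nu X f)
  have "\<And>A. sem M (\<rho>(X := A)) f = sem M (\<rho>'(X := A)) f"
    using Nu by (intro Nu.IH) auto
  then show ?case by simp
next
  case (And f g)
  have "sem M \<rho> f = sem M \<rho>' f" by (rule And.IH(1)) (use And.prems in auto)
  moreover have "sem M \<rho> g = sem M \<rho>' g" by (rule And.IH(2)) (use And.prems in auto)
  ultimately show ?case by simp
next
  case (Or f g)
  have "sem M \<rho> f = sem M \<rho>' f" by (rule Or.IH(1)) (use Or.prems in auto)
  moreover have "sem M \<rho> g = sem M \<rho>' g" by (rule Or.IH(2)) (use Or.prems in auto)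
  ultimately show ?case by simp
next
  case (Imp f g)
  have "sem M \<rho> f = sem M \<rho>' f" by (rule Imp.IH(1)) (use Imp.prems in auto)
  moreover have "sem M \<rho> g = sem M \<rho>' g" by (rule Imp.IH(2)) (use Imp.prems in auto)
  ultimately show ?case by simp
next
  case (Box f)
  have "sem M \<rho> f = sem M \<rho>' f" by (rule Box.IH) (use Box.prems in auto)
  then show ?case by simp
next
  case (Dia f)
  have "sem M \<rho> f = sem M \<rho>' f" by (rule Dia.IH) (use Dia.prems in auto)
  then show ?case by simp
qed auto

lemma lfp_on_pointwise: "(\<And>A. G1 A \<subseteq> G2 A) \<Longrightarrow> lfp_on W G1 \<subseteq> lfp_on W G2"
  unfolding lfp_on_def by (rule Inter_anti_mono) blast

lemma gfp_on_pointwise: "(\<And>A. G1 A \<subseteq> G2 A) \<Longrightarrow> gfp_on W G1 \<subseteq> gfp_on W G2"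
  unfolding gfp_on_def by (rule Union_mono) blast

lemma sem_mono:
  "polar X b \<psi> \<Longrightarrow> A \<subseteq> A' \<Longrightarrow>
    (b \<longrightarrow> sem M (\<rho>(X := A)) \<psi> \<subseteq> sem M (\<rho>(X := A')) \<psi>) \<and>
    (\<not> b \<longrightarrow> sem M (\<rho>(X := A')) \<psi> \<subseteq> sem M (\<rho>(X := A)) \<psi>)"
proof (induction \<psi> arbitrary: \<rho> b)
  case (Imp f g)
  have pf: "polar X (\<not> b) f" and pg: "polar X b g" using Imp.prems(1) by auto
  have f1: "\<not> b \<Longrightarrow> sem M (\<rho>(X := A)) f \<subseteq> sem M (\<rho>(X := A')) f"
    using Imp.IH(1)[OF pf Imp.prems(2), of \<rho>] by blast
  have f2: "b \<Longrightarrow> sem M (\<rho>(X := A')) f \<subseteq> sem M (\<rho>(X := A)) f"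
    using Imp.IH(1)[OF pf Imp.prems(2), of \<rho>] by blast
  have g1: "b \<Longrightarrow> sem M (\<rho>(X := A)) g \<subseteq> sem M (\<rho>(X := A')) g"
    using Imp.IH(2)[OF pg Imp.prems(2), of \<rho>] by blast
  have g2: "\<not> b \<Longrightarrow> sem M (\<rho>(X := A')) g \<subseteq> sem M (\<rho>(X := A)) g"
    using Imp.IH(2)[OF pg Imp.prems(2), of \<rho>] by blast
  show ?case
  proof (intro conjI impI)
    assume b
    show "sem M (\<rho>(X := A)) (Imp f g) \<subseteq> sem M (\<rho>(X := A')) (Imp f g)"
      using f2[OF \<open>b\<close>] g1[OF \<open>b\<close>] by (simp only: sem.simps) blast
  next
    assume "\<not> b"
    show "sem M (\<rho>(X := A')) (Imp f g) \<subseteq> sem M (\<rho>(X := A)) (Imp f g)"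
      using f1[OF \<open>\<not> b\<close>] g2[OF \<open>\<not> b\<close>] by (simp only: sem.simps) blast
  qed
next
  case (Box f)
  then show ?case by (cases b) (simp; blast)+
next
  case (Dia f)
  then show ?case by (cases b) (simp; blast)+
next
  case (And f g)
  then show ?case by (cases b) (simp; blast)+
next
  case (Or f g)
  then show ?case by (cases b) (simp; blast)+
next
  case (Mu Y f)
  show ?case
  proof (cases "Y = X")
    case True
    then have e: "(\<lambda>C. sem M (\<rho>(X := A, Y := C)) f) = (\<lambda>C. sem M (\<rho>(X := A', Y := C)) f)" by simp
    show ?thesis by (simp only: sem.simps e) simp
  next
    case False
    have h: "polar X b f" using Mu.prems False by simp
    have "(b \<longrightarrow> sem M (\<rho>(X := A, Y := C)) f \<subseteq> sem M (\<rho>(X := A', Y := C)) f) \<and>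
      (\<not> b \<longrightarrow> sem M (\<rho>(X := A', Y := C)) f \<subseteq> sem M (\<rho>(X := A, Y := C)) f)" for C
      using Mu.IH[OF h Mu.prems(2), of "\<rho>(Y := C)"] fun_upd_twist[OF False, of \<rho> C] by (simp only: fun_upd_twist[OF False])
    note H = this
    show ?thesis
    proof (intro conjI impI)
      assume b
      show "sem M (\<rho>(X := A)) (Mu Y f) \<subseteq> sem M (\<rho>(X := A')) (Mu Y f)"
        unfolding sem.simps by (rule lfp_on_pointwise) (use H \<open>b\<close> in blast)
    next
      assume "\<not> b"
      show "sem M (\<rho>(X := A')) (Mu Y f) \<subseteq> sem M (\<rho>(X := A)) (Mu Y f)"
        unfolding sem.simps by (rule lfp_on_pointwise) (use H \<open>\<not> b\<close> in blast)
    qed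
  qed
next
  case (Nu Y f)
  show ?case
  proof (cases "Y = X")
    case True
    then have e: "(\<lambda>C. sem M (\<rho>(X := A, Y := C)) f) = (\<lambda>C. sem M (\<rho>(X := A', Y := C)) f)" by simp
    show ?thesis by (simp only: sem.simps e) simp
  next
    case False
    have h: "polar X b f" using Nu.prems False by simp
    have "(b \<longrightarrow> sem M (\<rho>(X := A, Y := C)) f \<subseteq> sem M (\<rho>(X := A', Y := C)) f) \<and>
      (\<not> b \<longrightarrow> sem M (\<rho>(X := A', Y := C)) f \<subseteq> sem M (\<rho>(X := A, Y := C)) f)" for C
      using Nu.IH[OF h Nu.prems(2), of "\<rho>(Y := C)"] fun_upd_twist[OF False, of \<rho> C] by (simp only: fun_upd_twist[OF False])
    note H = this
    show ?thesis
    proof (intro conjI impI)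
      assume b
      show "sem M (\<rho>(X := A)) (Nu Y f) \<subseteq> sem M (\<rho>(X := A')) (Nu Y f)"
        unfolding sem.simps by (rule gfp_on_pointwise) (use H \<open>b\<close> in blast)
    next
      assume "\<not> b"
      show "sem M (\<rho>(X := A')) (Nu Y f) \<subseteq> sem M (\<rho>(X := A)) (Nu Y f)"
        unfolding sem.simps by (rule gfp_on_pointwise) (use H \<open>\<not> b\<close> in blast)
    qed
  qed
qed auto

lemma ck_V: "ck_model M \<Longrightarrow> mV M P \<subseteq> mW M"
  unfolding ck_model_def by blast
lemma ck_Wb: "ck_model M \<Longrightarrow> mWb M \<subseteq> mW M"
  unfolding ck_model_def by blast

lemma lfp_on_sub: "G W \<subseteq> W \<Longrightarrow> lfp_on W G \<subseteq> W"
  unfolding lfp_on_def by blast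

lemma gfp_on_sub: "gfp_on W G \<subseteq> W"
  unfolding gfp_on_def by blast

lemma sem_W: "ck_model M \<Longrightarrow> (\<forall>Y\<in>free_vars \<psi>. \<rho> Y \<subseteq> mW M) \<Longrightarrow> sem M \<rho> \<psi> \<subseteq> mW M"
proof (induction \<psi> arbitrary: \<rho>)
  case (Prop P) then show ?case using ck_V by simp
next
  case Bot then show ?case using ck_Wb by simp
next
  case (Mu X f)
  have "sem M (\<rho>(X := mW M)) f \<subseteq> mW M" using Mu by (intro Mu.IH) auto
  then show ?case by (simp add: lfp_on_sub)
next
  case (Nu X f)
  then show ?case by (simp add: gfp_on_sub)
qed auto

section \<open>Knaster-Tarski for lfp_on / gfp_on\<close>

locale kt =
  fixes W :: "'a set" and G :: "'a set \<Rightarrow> 'a set"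
  assumes G_mono: "\<And>A B. A \<subseteq> B \<Longrightarrow> G A \<subseteq> G B"
    and G_W: "\<And>A. A \<subseteq> W \<Longrightarrow> G A \<subseteq> W"
begin

lemma lfp_W: "lfp_on W G \<subseteq> W"
  using G_W[of W] lfp_on_sub[of G W] by blast

lemma lfp_lower: "A \<subseteq> W \<Longrightarrow> G A \<subseteq> A \<Longrightarrow> lfp_on W G \<subseteq> A"
  unfolding lfp_on_def by blast

lemma lfp_fix: "G (lfp_on W G) = lfp_on W G"
proof -
  have 1: "G (lfp_on W G) \<subseteq> lfp_on W G"
    unfolding lfp_on_def
  proof (rule Inter_greatest)
    fix A assume "A \<in> {A. A \<subseteq> W \<and> G A \<subseteq> A}"
    then have "\<Inter> {A. A \<subseteq> W \<and> G A \<subseteq> A} \<subseteq> A" "G A \<subseteq> A" "A \<subseteq> W" by auto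
    then show "G (\<Inter> {A. A \<subseteq> W \<and> G A \<subseteq> A}) \<subseteq> A" using G_mono by blast
  qed
  have "lfp_on W G \<subseteq> G (lfp_on W G)"
    by (rule lfp_lower) (use 1 G_mono G_W lfp_W in auto)
  then show ?thesis using 1 by blast
qed

lemma gfp_upper: "A \<subseteq> W \<Longrightarrow> A \<subseteq> G A \<Longrightarrow> A \<subseteq> gfp_on W G"
  unfolding gfp_on_def by blast

lemma gfp_fix: "G (gfp_on W G) = gfp_on W G"
proof -
  have 1: "gfp_on W G \<subseteq> G (gfp_on W G)"
    unfolding gfp_on_def
  proof (rule Union_least)
    fix A assume "A \<in> {A. A \<subseteq> W \<and> A \<subseteq> G A}"
    then have "A \<subseteq> \<Union> {A. A \<subseteq> W \<and> A \<subseteq> G A}" "A \<subseteq> G A" "A \<subseteq> W" by auto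
    then show "A \<subseteq> G (\<Union> {A. A \<subseteq> W \<and> A \<subseteq> G A})" using G_mono by blast
  qed
  have "G (gfp_on W G) \<subseteq> gfp_on W G"
    by (rule gfp_upper) (use 1 G_mono G_W gfp_on_sub[of W G] in auto)
  then show ?thesis using 1 by blast
qed

end

section \<open>Ordinal approximants\<close>

definition iterL :: "('o \<times> 'o) set \<Rightarrow> ('a set \<Rightarrow> 'a set) \<Rightarrow> 'o \<Rightarrow> 'a set" where
  "iterL lt G = wfrec lt (\<lambda>f a. \<Union> {G (f b) | b. (b, a) \<in> lt})"

definition iterU :: "('o \<times> 'o) set \<Rightarrow> 'a set \<Rightarrow> ('a set \<Rightarrow> 'a set) \<Rightarrow> 'o \<Rightarrow> 'a set" where
  "iterU lt W G = wfrec lt (\<lambda>f a. W \<inter> \<Inter> {G (f b) | b. (b, a) \<in> lt})"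

lemma iterL_unfold: "wf lt \<Longrightarrow> iterL lt G a = \<Union> {G (iterL lt G b) | b. (b, a) \<in> lt}"
  unfolding iterL_def by (subst wfrec) (auto simp: cut_def)

lemma iterU_unfold: "wf lt \<Longrightarrow> iterU lt W G a = W \<inter> \<Inter> {G (iterU lt W G b) | b. (b, a) \<in> lt}"
  unfolding iterU_def by (subst wfrec) (auto simp: cut_def)

lemma iterL_W: assumes wf: "wf lt" and GW: "\<And>A. A \<subseteq> W \<Longrightarrow> G A \<subseteq> W"
  shows "iterL lt G a \<subseteq> W"
proof (induction a rule: wf_induct_rule[OF wf])
  case (1 a)
  show ?case by (subst iterL_unfold[OF wf]) (use 1 GW in blast)
qed

lemma iterU_W': "wf lt \<Longrightarrow> iterU lt W G a \<subseteq> W"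
  by (subst iterU_unfold) auto

locale ordsys =
  fixes lt :: "('o \<times> 'o) set"
  assumes wf_lt: "wf lt" and trans_lt: "trans lt"
    and total_lt: "\<And>a b. a \<noteq> b \<Longrightarrow> (a, b) \<in> lt \<or> (b, a) \<in> lt"
begin

lemma lt_irrefl: "(a, a) \<notin> lt"
  using wf_lt by (meson wf_not_refl)

end

locale appx = ordsys lt + kt W G for lt :: "('o \<times> 'o) set" and W :: "'a set" and G +
  assumes noinj: "\<not> (\<exists>f :: 'o \<Rightarrow> 'a set. inj f)"
begin

lemma iterL_le_lfp: "iterL lt G a \<subseteq> lfp_on W G"
proof (induction a rule: wf_induct_rule[OF wf_lt])
  case (1 a)
  have "\<Union> {G (iterL lt G b) | b. (b, a) \<in> lt} \<subseteq> lfp_on W G"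
  proof (rule Union_least)
    fix X assume "X \<in> {G (iterL lt G b) | b. (b, a) \<in> lt}"
    then obtain b where "X = G (iterL lt G b)" "(b, a) \<in> lt" by blast
    then have "X \<subseteq> G (lfp_on W G)" using 1 G_mono by blast
    then show "X \<subseteq> lfp_on W G" using lfp_fix by simp
  qed
  then show ?case by (subst iterL_unfold[OF wf_lt])
qed

lemma iterL_mem: "v \<in> iterL lt G a \<Longrightarrow> \<exists>b. (b, a) \<in> lt \<and> v \<in> G (iterL lt G b)"
  using iterL_unfold[OF wf_lt, of G a] by auto

lemma not_inj_pair: "\<exists>a a'. (a, a') \<in> lt \<and> F a = (F a' :: 'a set)"
proof -
  have "\<not> inj F" using noinj by blast
  then obtain a a' where "a \<noteq> a'" "F a = F a'" unfolding inj_def by blast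
  then show ?thesis using total_lt by metis
qed

lemma lfp_reach: assumes "v \<in> lfp_on W G" shows "\<exists>b. v \<in> G (iterL lt G b)"
proof -
  obtain a a' where aa: "(a, a') \<in> lt" "iterL lt G a = iterL lt G a'"
    using not_inj_pair[of "iterL lt G"] by blast
  have "G (iterL lt G a) \<subseteq> iterL lt G a'"
    using iterL_unfold[OF wf_lt, of G a'] aa(1) by blast
  then have "G (iterL lt G a) \<subseteq> iterL lt G a" using aa(2) by simp
  moreover have "iterL lt G a \<subseteq> W" using iterL_le_lfp[of a] lfp_W by (rule subset_trans)
  ultimately have "lfp_on W G \<subseteq> iterL lt G a" by (rule lfp_lower[rotated])
  then show ?thesis using assms iterL_mem by blast
qed

lemma iterU_W: "iterU lt W G a \<subseteq> W"
  using iterU_unfold[OF wf_lt, of W G a] by blast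

lemma gfp_le_iterU: "gfp_on W G \<subseteq> iterU lt W G a"
proof (induction a rule: wf_induct_rule[OF wf_lt])
  case (1 a)
  have "gfp_on W G \<subseteq> W \<inter> \<Inter> {G (iterU lt W G b) | b. (b, a) \<in> lt}"
  proof
    fix v assume v: "v \<in> gfp_on W G"
    have "v \<in> W" using gfp_on_sub[of W G] v by (rule subsetD)
    moreover have "v \<in> X" if Xin: "X \<in> {G (iterU lt W G b) | b. (b, a) \<in> lt}" for X
    proof -
      obtain b where "X = G (iterU lt W G b)" "(b, a) \<in> lt" using Xin by auto
      then have "G (gfp_on W G) \<subseteq> X" using 1 G_mono by blast
      then have "gfp_on W G \<subseteq> X" using gfp_fix by simp
      then show ?thesis using v by (rule subsetD)
    qed
    ultimately show "v \<in> W \<inter> \<Inter> {G (iterU lt W G b) | b. (b, a) \<in> lt}" by blast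
  qed
  then show ?case by (subst iterU_unfold[OF wf_lt])
qed

lemma iterU_mem: "v \<in> W \<Longrightarrow> v \<notin> iterU lt W G a \<Longrightarrow> \<exists>b. (b, a) \<in> lt \<and> v \<notin> G (iterU lt W G b)"
  using iterU_unfold[OF wf_lt, of W G a] by auto

lemma gfp_reach: assumes "v \<in> W" "v \<notin> gfp_on W G" shows "\<exists>b. v \<notin> G (iterU lt W G b)"
proof -
  obtain a a' where aa: "(a, a') \<in> lt" "iterU lt W G a = iterU lt W G a'"
    using not_inj_pair[of "iterU lt W G"] by blast
  have "iterU lt W G a' \<subseteq> G (iterU lt W G a)"
    using iterU_unfold[OF wf_lt, of W G a'] aa(1) by blast
  then have "iterU lt W G a \<subseteq> G (iterU lt W G a)" using aa(2) by simp
  then have "iterU lt W G a \<subseteq> gfp_on W G" using iterU_W by (intro gfp_upper) auto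
  then have "v \<notin> iterU lt W G a" using assms by blast
  then show ?thesis using assms iterU_mem by blast
qed

end

section \<open>A concrete big well-order\<close>

definition bigR :: "('a set set \<times> 'a set set) set" where
  "bigR = (SOME r. Well_order r \<and> Field r = UNIV)"

definition bigLt :: "('a set set \<times> 'a set set) set" where
  "bigLt = bigR - Id"

lemma bigR_props: "Well_order (bigR :: ('a set set \<times> 'a set set) set) \<and> Field (bigR :: ('a set set \<times> 'a set set) set) = UNIV"
  unfolding bigR_def using someI_ex[OF well_ordering] by blast

lemma bigLt_ordsys: "ordsys (bigLt :: ('a set set \<times> 'a set set) set)"
proof
  have W: "Well_order (bigR :: ('a set set \<times> 'a set set) set)" and F: "Field (bigR :: ('a set set \<times> 'a set set) set) = UNIV"
    using bigR_props by blast+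
  show "wf (bigLt :: ('a set set \<times> 'a set set) set)"
    using W unfolding bigLt_def well_order_on_def by blast
  show "trans (bigLt :: ('a set set \<times> 'a set set) set)"
    using W unfolding bigLt_def well_order_on_def linear_order_on_def partial_order_on_def
      preorder_on_def antisym_def trans_def by blast
  fix a b :: "'a set set" assume "a \<noteq> b"
  then show "(a, b) \<in> bigLt \<or> (b, a) \<in> bigLt"
    using W F unfolding bigLt_def well_order_on_def linear_order_on_def total_on_def by blast
qed

lemma no_inj_bigtype: "\<not> (\<exists>f :: 'a set set \<Rightarrow> 'a set. inj f)"
proof
  assume "\<exists>f :: 'a set set \<Rightarrow> 'a set. inj f"
  then obtain f :: "'a set set \<Rightarrow> 'a set" where f: "inj f" by blast
  have "inv f ` (UNIV :: 'a set set) = Pow UNIV"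
    using f by (auto simp: image_iff) (metis inv_f_f)
  then show False using Cantors_theorem by blast
qed


section \<open>Lexicographic order on lists\<close>

fun llt :: "('o \<times> 'o) set \<Rightarrow> 'o list \<Rightarrow> 'o list \<Rightarrow> bool" where
  "llt r (a # as) (b # bs) = ((a, b) \<in> r \<or> (a = b \<and> llt r as bs))"
| "llt r _ _ = False"

definition lle :: "('o \<times> 'o) set \<Rightarrow> 'o list \<Rightarrow> 'o list \<Rightarrow> bool" where
  "lle r as bs \<longleftrightarrow> as = bs \<or> llt r as bs"

lemma llt_trans: "trans r \<Longrightarrow> llt r as bs \<Longrightarrow> llt r bs cs \<Longrightarrow> llt r as cs"
proof (induction as arbitrary: bs cs)
  case Nil then show ?case by simp
next
  case (Cons a as)
  then obtain b bs' where b: "bs = b # bs'" by (cases bs) auto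
  then obtain c cs' where c: "cs = c # cs'" using Cons by (cases cs) auto
  show ?case using Cons b c by (auto dest: transD)
qed

lemma lle_trans: "trans r \<Longrightarrow> lle r as bs \<Longrightarrow> lle r bs cs \<Longrightarrow> lle r as cs"
  unfolding lle_def using llt_trans by blast

lemma lle_llt_trans: "trans r \<Longrightarrow> lle r as bs \<Longrightarrow> llt r bs cs \<Longrightarrow> llt r as cs"
  unfolding lle_def using llt_trans by blast

lemma llt_lle_trans: "trans r \<Longrightarrow> llt r as bs \<Longrightarrow> lle r bs cs \<Longrightarrow> llt r as cs"
  unfolding lle_def using llt_trans by blast

lemma llt_irrefl: "(\<And>a. (a, a) \<notin> r) \<Longrightarrow> \<not> llt r as as"
  by (induction as) auto

lemma llt_total: "(\<And>a b. a \<noteq> b \<Longrightarrow> (a, b) \<in> r \<or> (b, a) \<in> r) \<Longrightarrow> length as = length bs \<Longrightarrow>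
  as = bs \<or> llt r as bs \<or> llt r bs as"
proof (induction as arbitrary: bs)
  case Nil then show ?case by simp
next
  case (Cons a as)
  then obtain b bs' where b: "bs = b # bs'" by (cases bs) auto
  show ?case using Cons.IH[OF Cons.prems(1), of bs'] Cons.prems b by auto
qed

lemma llt_take: "llt r as bs \<Longrightarrow> lle r (take k as) (take k bs)"
proof (induction as arbitrary: bs k)
  case Nil then show ?case by simp
next
  case (Cons a as)
  then obtain b bs' where b: "bs = b # bs'" by (cases bs) auto
  show ?case
  proof (cases k)
    case 0 then show ?thesis by (simp add: lle_def)
  next
    case (Suc k')
    then show ?thesis using Cons b by (auto simp: lle_def)
  qed
qed

lemma lle_take: "lle r as bs \<Longrightarrow> lle r (take k as) (take k bs)"
  using llt_take unfolding lle_def by blast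

lemma llt_snoc_eq: "(x, y) \<in> r \<Longrightarrow> llt r (p @ [x]) (p @ [y])"
  by (induction p) auto

lemma llt_snoc_lt: "llt r p q \<Longrightarrow> length p = length q \<Longrightarrow> llt r (p @ [x]) (q @ [y])"
proof (induction p arbitrary: q)
  case Nil then show ?case by simp
next
  case (Cons a p)
  then obtain b q' where "q = b # q'" by (cases q) auto
  then show ?case using Cons by auto
qed

lemma llt_lexn: "llt r as bs \<Longrightarrow> length as = length bs \<Longrightarrow> (as, bs) \<in> lexn r (length as)"
proof (induction as arbitrary: bs)
  case Nil then show ?case by simp
next
  case (Cons a as)
  then obtain b bs' where b: "bs = b # bs'" by (cases bs) auto
  show ?case
  proof (cases "(a, b) \<in> r")
    case True
    have "\<exists>xys x y xs' ys'. a # as = xys @ x # xs' \<and> bs = xys @ y # ys' \<and> (x, y) \<in> r"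
      using b True by (intro exI[of _ "[]"] exI[of _ a] exI[of _ b] exI[of _ as] exI[of _ bs']) simp
    then show ?thesis using Cons.prems unfolding lexn_conv by simp
  next
    case False
    then have ab: "a = b" "llt r as bs'" using Cons.prems b by auto
    then have "(as, bs') \<in> lexn r (length as)" using Cons b by auto
    then obtain xys x y xs' ys' where e: "as = xys @ x # xs'" "bs' = xys @ y # ys'" "(x, y) \<in> r"
      unfolding lexn_conv by blast
    have "\<exists>xys x y xs' ys'. a # as = xys @ x # xs' \<and> bs = xys @ y # ys' \<and> (x, y) \<in> r"
      using b ab e by (intro exI[of _ "a # xys"] exI[of _ x] exI[of _ y] exI[of _ xs'] exI[of _ ys']) simp
    then show ?thesis using Cons.prems unfolding lexn_conv by simp
  qed
qed

lemma wf_llt: "wf r \<Longrightarrow> wf {(as, bs). length as = n \<and> length bs = n \<and> llt r as bs}"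
  by (rule wf_subset[OF wf_lexn[of r n]]) (auto intro: llt_lexn)

lemma take_map_eq: "(\<And>j. j < k \<Longrightarrow> j < length xs \<Longrightarrow> f (xs ! j) = g (xs ! j)) \<Longrightarrow> take k (map f xs) = take k (map g xs)"
  by (rule nth_equalityI) auto

lemma take_Suc_map: "k < length xs \<Longrightarrow> take (Suc k) (map f xs) = take k (map f xs) @ [f (xs ! k)]"
  by (simp add: take_Suc_conv_app_nth)

fun pw :: "('w, 'p, 'v) gpos \<Rightarrow> 'w" where
  "pw (GP v f Q) = v" | "pw (GDia v f Q) = v" | "pw (GImp v f g Q) = v"

fun pf :: "('w, 'p, 'v) gpos \<Rightarrow> ('p, 'v) fm" where
  "pf (GP v f Q) = f" | "pf (GDia v f Q) = Dia f" | "pf (GImp v f g Q) = Imp f g"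

lemma occ_child:
  "occ \<chi> (And f g) b \<Longrightarrow> occ \<chi> f b" "occ \<chi> (And f g) b \<Longrightarrow> occ \<chi> g b"
  "occ \<chi> (Or f g) b \<Longrightarrow> occ \<chi> f b" "occ \<chi> (Or f g) b \<Longrightarrow> occ \<chi> g b"
  "occ \<chi> (Imp f g) b \<Longrightarrow> occ \<chi> f (\<not> b)" "occ \<chi> (Imp f g) b \<Longrightarrow> occ \<chi> g b"
  "occ \<chi> (Box f) b \<Longrightarrow> occ \<chi> f b" "occ \<chi> (Dia f) b \<Longrightarrow> occ \<chi> f b"
  "occ \<chi> (Mu X f) b \<Longrightarrow> occ \<chi> f b" "occ \<chi> (Nu X f) b \<Longrightarrow> occ \<chi> f b"
  using occ_trans[of \<chi> "And f g" b f True] occ_trans[of \<chi> "And f g" b g True]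
    occ_trans[of \<chi> "Or f g" b f True] occ_trans[of \<chi> "Or f g" b g True]
    occ_trans[of \<chi> "Imp f g" b f False] occ_trans[of \<chi> "Imp f g" b g True]
    occ_trans[of \<chi> "Box f" b f True] occ_trans[of \<chi> "Dia f" b f True]
    occ_trans[of \<chi> "Mu X f" b f True] occ_trans[of \<chi> "Nu X f" b f True]
  by (auto simp: occ_self)

context setting
begin

abbreviation W where "W \<equiv> mW M"

abbreviation Reach where "Reach p \<equiv> reachable M w \<phi> p"

lemma ck_Le: "(u, v) \<in> mLe M \<Longrightarrow> u \<in> W \<and> v \<in> W"
  using ck unfolding ck_model_def by blast

lemma ck_R: "(u, v) \<in> mR M \<Longrightarrow> u \<in> W \<and> v \<in> W"
  using ck unfolding ck_model_def by blast

lemma ck_refl: "u \<in> W \<Longrightarrow> (u, u) \<in> mLe M"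
  using ck unfolding ck_model_def refl_on_def by blast

lemma Reach_init: "Reach (GP w \<phi> Verifier)"
  unfolding reachable_def init_pos_def by simp

lemma Reach_step: "Reach p \<Longrightarrow> p' \<in> moves M \<phi> p \<Longrightarrow> Reach p'"
  unfolding reachable_def by (rule rtrancl_into_rtrancl) auto

definition posOK :: "('w, 'p, 'v) gpos \<Rightarrow> bool" where
  "posOK p \<longleftrightarrow> pw p \<in> W \<and> occ \<phi> (pf p) (role_I p = Verifier)"

lemma dual_V: "(dual Q = Verifier) = (\<not> (Q = Verifier))"
  by (cases Q) auto

lemma posOK_step: assumes "posOK p" "p' \<in> moves M \<phi> p" shows "posOK p'"
proof (cases p)
  case (GP v f Q)
  show ?thesis
  proof (cases f)
    case (Var X)
    then obtain F where F: "p' = GP v F Q" "F \<in> Sub \<phi>" "isbind X F"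
      using assms GP by (auto simp: isbind_def)
    have X: "X \<in> V0" using assms GP Var occ_Sub unfolding posOK_def V0_def by fastforce
    have "B X = F" using B_eq[OF X F(2,3)] .
    obtain c where c: "occ \<phi> (B X) c" using Sub_occ B_props(1)[OF X] by blast
    have "c = (Q = Verifier)" using parity_var[OF _ c] assms GP Var unfolding posOK_def by auto
    then show ?thesis using F c \<open>B X = F\<close> GP assms(1) unfolding posOK_def by simp
  next
    case (Imp g h)
    then show ?thesis using assms GP unfolding posOK_def by (auto dest: ck_Le)
  next
    case (Box g)
    then show ?thesis using assms GP unfolding posOK_def by (auto dest: ck_Le ck_R occ_child)
  next
    case (Dia g)
    then show ?thesis using assms GP unfolding posOK_def by (auto dest: ck_Le)
  qed (use assms GP in \<open>auto simp: posOK_def dest: occ_child\<close>)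
next
  case (GDia v f Q)
  then show ?thesis using assms unfolding posOK_def by (auto dest: ck_R occ_child)
next
  case (GImp v f g Q)
  then show ?thesis using assms unfolding posOK_def by (auto simp: dual_V dest: occ_child)
qed

lemma Reach_ok: "Reach p \<Longrightarrow> posOK p"
  unfolding reachable_def
proof (induction rule: rtrancl_induct)
  case base
  then show ?case using w_in occ_self unfolding posOK_def init_pos_def by auto
next
  case (step y z)
  then show ?case using posOK_step by auto
qed

lemma Reach_Sub: "Reach p \<Longrightarrow> pf p \<in> Sub \<phi>"
  using Reach_ok occ_Sub unfolding posOK_def by blast

lemma Reach_W: "Reach p \<Longrightarrow> pw p \<in> W"
  using Reach_ok unfolding posOK_def by blast

lemma role_uniq: "X \<in> V0 \<Longrightarrow> Reach (GP v (B X) Q) \<Longrightarrow> Reach (GP v' (B X) Q') \<Longrightarrow> Q = Q'"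
  using Reach_ok[of "GP v (B X) Q"] Reach_ok[of "GP v' (B X) Q'"] parity_B_uniq[of X]
  unfolding posOK_def by (cases Q; cases Q') auto

end


locale pl = setting M w \<phi> for M :: "('w, 'p) ck_struct" and w and \<phi> :: "('p, 'v) fm" +
  fixes P :: player
begin

definition Prole :: "role \<Rightarrow> role" where
  "Prole Q = (if P = PI then Q else dual Q)"

abbreviation isMuB :: "'v \<Rightarrow> bool" where
  "isMuB Z \<equiv> B Z = Mu Z (bdy (B Z))"

definition bad :: "'v \<Rightarrow> bool" where
  "bad X \<longleftrightarrow> X \<in> V0 \<and> (\<exists>v Q. Reach (GP v (B X) Q) \<and>
     ((Prole Q = Verifier \<and> isMuB X) \<or> (Prole Q = Refuter \<and> B X = Nu X (bdy (B X)))))"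

abbreviation lt :: "('w set set \<times> 'w set set) set" where
  "lt \<equiv> bigLt"

definition GX :: "'v \<Rightarrow> ('v \<Rightarrow> 'w set) \<Rightarrow> 'w set \<Rightarrow> 'w set" where
  "GX X \<rho> A = sem M (\<rho>(X := A)) (bdy (B X))"

definition valZ :: "('v \<Rightarrow> 'w set set) \<Rightarrow> ('v \<Rightarrow> 'w set) \<Rightarrow> 'v \<Rightarrow> 'w set" where
  "valZ \<kappa> \<rho> Z = (if bad Z then (if isMuB Z then iterL lt (GX Z \<rho>) (\<kappa> Z) else iterU lt W (GX Z \<rho>) (\<kappa> Z))
                 else sem M \<rho> (B Z))"

function rk :: "('v \<Rightarrow> 'w set set) \<Rightarrow> 'v \<Rightarrow> 'w set" where
  "rk \<kappa> Z = valZ \<kappa> (\<lambda>Y. if Y \<in> free_vars (B Z) \<and> size (B Z) < size (B Y) \<and> size (B Y) \<le> size \<phi>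
                          then rk \<kappa> Y else {}) Z"
  by auto
termination
  by (relation "measure (\<lambda>(\<kappa>, Z). Suc (size \<phi>) - size (B Z))") auto

declare rk.simps[simp del]

lemma wf_lt: "wf lt" and trans_lt: "trans lt" and total_lt: "\<And>a b. a \<noteq> b \<Longrightarrow> (a, b) \<in> lt \<or> (b, a) \<in> lt"
  using bigLt_ordsys[where 'a='w] unfolding ordsys_def by blast+

lemma lt_irrefl: "(a, a) \<notin> lt"
  using wf_lt by (meson wf_not_refl)

lemma GX_cong: assumes "Z \<in> V0" "\<forall>Y\<in>free_vars (B Z). \<rho> Y = \<rho>' Y" shows "GX Z \<rho> = GX Z \<rho>'"
proof
  fix A
  have "\<forall>Y\<in>free_vars (bdy (B Z)). (\<rho>(Z := A)) Y = (\<rho>'(Z := A)) Y"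
    using assms fv_bdy[OF B_props(2)[OF assms(1)]] by auto
  then show "GX Z \<rho> A = GX Z \<rho>' A" unfolding GX_def by (rule sem_fv)
qed

lemma valZ_cong: assumes "Z \<in> V0" "\<forall>Y\<in>free_vars (B Z). \<rho> Y = \<rho>' Y" shows "valZ \<kappa> \<rho> Z = valZ \<kappa> \<rho>' Z"
  unfolding valZ_def using GX_cong[OF assms] sem_fv[OF assms(2), of M] by simp

lemma rk_eq: assumes "Z \<in> V0" shows "rk \<kappa> Z = valZ \<kappa> (rk \<kappa>) Z"
proof -
  have "\<forall>Y\<in>free_vars (B Z). (\<lambda>Y. if Y \<in> free_vars (B Z) \<and> size (B Z) < size (B Y) \<and> size (B Y) \<le> size \<phi>
                          then rk \<kappa> Y else {}) Y = rk \<kappa> Y"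
  proof
    fix Y assume Y: "Y \<in> free_vars (B Z)"
    then have "Y \<in> V0 \<and> size (B Z) < size (B Y)" using fv_B_size[OF assms] by blast
    moreover then have "size (B Y) \<le> size \<phi>" using Sub_size B_props(1) by blast
    ultimately show "(if Y \<in> free_vars (B Z) \<and> size (B Z) < size (B Y) \<and> size (B Y) \<le> size \<phi>
                          then rk \<kappa> Y else {}) = rk \<kappa> Y" using Y by simp
  qed
  then show ?thesis by (subst rk.simps) (rule valZ_cong[OF assms])
qed

lemma valZ_W: assumes "\<And>Y. \<rho> Y \<subseteq> W" shows "valZ \<kappa> \<rho> Z \<subseteq> W"
proof -
  have GW: "GX Z \<rho> A \<subseteq> W" if "A \<subseteq> W" for A
    unfolding GX_def by (rule sem_W[OF ck]) (use assms that in auto)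
  have 1: "iterL lt (GX Z \<rho>) (\<kappa> Z) \<subseteq> W" using iterL_W[OF wf_lt GW] .
  have 2: "iterU lt W (GX Z \<rho>) (\<kappa> Z) \<subseteq> W" using iterU_W'[OF wf_lt] .
  have 3: "sem M \<rho> (B Z) \<subseteq> W" using sem_W[OF ck, of "B Z" \<rho>] assms by blast
  show ?thesis unfolding valZ_def using 1 2 3 by simp
qed

lemma rk_W: "rk \<kappa> Z \<subseteq> W"
proof (induction \<kappa> Z rule: rk.induct)
  case (1 \<kappa> Z)
  show ?case by (subst rk.simps) (rule valZ_W, use 1 in auto)
qed

lemma rk_dep:
  assumes "\<forall>Z'\<in>V0. s \<le> size (B Z') \<longrightarrow> \<kappa> Z' = \<kappa>' Z'"
  shows "Z \<in> V0 \<Longrightarrow> s \<le> size (B Z) \<Longrightarrow> rk \<kappa> Z = rk \<kappa>' Z"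
proof (induction "Suc (size \<phi>) - size (B Z)" arbitrary: Z rule: less_induct)
  case less
  have IH: "rk \<kappa> Y = rk \<kappa>' Y" if "Y \<in> free_vars (B Z)" for Y
  proof -
    have Y: "Y \<in> V0 \<and> size (B Z) < size (B Y)" using fv_B_size[OF less(2) that] by blast
    moreover then have "size (B Y) \<le> size \<phi>" using Sub_size B_props(1) by blast
    ultimately show ?thesis using less by auto
  qed
  have "rk \<kappa> Z = valZ \<kappa> (rk \<kappa>) Z" by (rule rk_eq[OF less(2)])
  also have "\<dots> = valZ \<kappa> (rk \<kappa>') Z" using valZ_cong[OF less(2)] IH by blast
  also have "\<dots> = valZ \<kappa>' (rk \<kappa>') Z"
  proof -
    have "\<kappa> Z = \<kappa>' Z" using assms less(2,3) by blast
    then show ?thesis unfolding valZ_def by simp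
  qed
  also have "\<dots> = rk \<kappa>' Z" by (rule rk_eq[OF less(2), symmetric])
  finally show ?case .
qed

end


lemma lfp_const: "c \<subseteq> W \<Longrightarrow> lfp_on W (\<lambda>_. c) = c"
  unfolding lfp_on_def by blast

lemma gfp_const: "c \<subseteq> W \<Longrightarrow> gfp_on W (\<lambda>_. c) = c"
  unfolding gfp_on_def by blast

context pl
begin

lemma GX_kt: assumes "Z \<in> V0" shows "kt W (GX Z (rk \<kappa>))"
proof
  fix A B' :: "'w set" assume "A \<subseteq> B'"
  then show "GX Z (rk \<kappa>) A \<subseteq> GX Z (rk \<kappa>) B'"
    unfolding GX_def using sem_mono[OF pos_bdy[OF assms], of A B' M "rk \<kappa>"] by blast
next
  fix A :: "'w set" assume "A \<subseteq> W"
  then show "GX Z (rk \<kappa>) A \<subseteq> W"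
    unfolding GX_def by (intro sem_W[OF ck]) (use rk_W in auto)
qed

lemma GX_appx: assumes "Z \<in> V0" shows "appx lt W (GX Z (rk \<kappa>))"
  unfolding appx_def appx_axioms_def
  using bigLt_ordsys[where 'a='w] GX_kt[OF assms] no_inj_bigtype[where 'a='w] by blast

lemma sem_B_mu: assumes "Z \<in> V0" "isMuB Z" shows "sem M \<rho> (B Z) = lfp_on W (GX Z \<rho>)"
proof -
  obtain g where g: "B Z = Mu Z g" using assms(2) by blast
  show ?thesis unfolding GX_def g by simp
qed

lemma sem_B_nu: assumes "Z \<in> V0" "\<not> isMuB Z" shows "sem M \<rho> (B Z) = gfp_on W (GX Z \<rho>)"
proof -
  have "B Z = Nu Z (bdy (B Z))" using B_form[OF assms(1)] assms(2) by blast
  then obtain g where g: "B Z = Nu Z g" by blast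
  show ?thesis unfolding GX_def g by simp
qed

lemma rk_nonbad: "Z \<in> V0 \<Longrightarrow> \<not> bad Z \<Longrightarrow> rk \<kappa> Z = sem M (rk \<kappa>) (B Z)"
  using rk_eq unfolding valZ_def by simp

lemma rk_bad_mu: "Z \<in> V0 \<Longrightarrow> bad Z \<Longrightarrow> isMuB Z \<Longrightarrow> rk \<kappa> Z = iterL lt (GX Z (rk \<kappa>)) (\<kappa> Z)"
  using rk_eq unfolding valZ_def by simp

lemma rk_bad_nu: "Z \<in> V0 \<Longrightarrow> bad Z \<Longrightarrow> \<not> isMuB Z \<Longrightarrow> rk \<kappa> Z = iterU lt W (GX Z (rk \<kappa>)) (\<kappa> Z)"
  using rk_eq unfolding valZ_def by simp

lemma sem_bdy: "sem M (rk \<kappa>) (bdy (B Z)) = GX Z (rk \<kappa>) (rk \<kappa> Z)"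
  unfolding GX_def by simp

lemma GX_agree:
  assumes "Y \<in> V0" "\<forall>Z'\<in>V0. size (B Y) < size (B Z') \<longrightarrow> \<kappa>1 Z' = \<kappa> Z'"
  shows "GX Y (rk \<kappa>1) = GX Y (rk \<kappa>)"
proof (rule GX_cong[OF assms(1)], rule ballI)
  fix Z assume Z: "Z \<in> free_vars (B Y)"
  have "Z \<in> V0 \<and> size (B Y) < size (B Z)" using fv_B_size[OF assms(1) Z] .
  then show "rk \<kappa>1 Z = rk \<kappa> Z"
    using rk_dep[of "Suc (size (B Y))" \<kappa>1 \<kappa> Z] assms(2) by auto
qed

fun corr :: "('v \<Rightarrow> 'w set set) \<Rightarrow> ('w, 'p, 'v) gpos \<Rightarrow> bool" where
  "corr \<kappa> (GP v f Q) = (v \<in> W \<and> (Prole Q = Verifier \<longleftrightarrow> v \<in> sem M (rk \<kappa>) f))"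
| "corr \<kappa> (GDia v f Q) = (v \<in> W \<and> (Prole Q = Verifier \<longleftrightarrow> (\<exists>u. (v, u) \<in> mR M \<and> u \<in> sem M (rk \<kappa>) f)))"
| "corr \<kappa> (GImp v f g Q) = (v \<in> W \<and> (Prole Q = Verifier \<longleftrightarrow> (v \<notin> sem M (rk \<kappa>) f \<or> v \<in> sem M (rk \<kappa>) g)))"

lemma Prole_dual: "Prole (dual Q) = dual (Prole Q)"
  unfolding Prole_def by (cases Q) auto

lemma role_cases: "Q \<noteq> Verifier \<longleftrightarrow> Q = Refuter"
  by (cases Q) auto

lemma dual_simps[simp]: "dual (dual Q) = Q" "(dual Q = Verifier) = (Q = Refuter)" "(dual Q = Refuter) = (Q = Verifier)"
  by (cases Q; simp)+

lemma owner_iff: "owner M \<phi> p = P \<longleftrightarrow> owner_role M \<phi> p = Prole (role_I p)"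
  unfolding owner_def Prole_def by (cases P; cases "owner_role M \<phi> p"; cases "role_I p") auto

lemma sem_sub_W: "sem M (rk \<kappa>) f \<subseteq> W"
  by (rule sem_W[OF ck]) (use rk_W in auto)

end


context pl
begin

lemma owner_GP_simps:
  "owner M \<phi> (GP v (Prop A) Q) = P \<longleftrightarrow> (if v \<in> mV M A then Refuter else Verifier) = Prole Q"
  "owner M \<phi> (GP v Bot Q) = P \<longleftrightarrow> (if v \<in> mWb M then Refuter else Verifier) = Prole Q"
  "owner M \<phi> (GP v (And f g) Q) = P \<longleftrightarrow> Prole Q = Refuter"
  "owner M \<phi> (GP v (Or f g) Q) = P \<longleftrightarrow> Prole Q = Verifier"
  "owner M \<phi> (GP v (Imp f g) Q) = P \<longleftrightarrow> Prole Q = Refuter"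
  "owner M \<phi> (GP v (Box f) Q) = P \<longleftrightarrow> Prole Q = Refuter"
  "owner M \<phi> (GP v (Dia f) Q) = P \<longleftrightarrow> Prole Q = Refuter"
  "owner M \<phi> (GDia v f Q) = P \<longleftrightarrow> Prole Q = Verifier"
  "owner M \<phi> (GImp v f g Q) = P \<longleftrightarrow> Prole Q = Verifier"
  by (auto simp: owner_iff)

lemma Prop_own: "corr \<kappa> (GP v (Prop A) Q) \<Longrightarrow> owner M \<phi> (GP v (Prop A) Q) \<noteq> P"
  by (cases "Prole Q") (auto simp: owner_GP_simps split: if_splits)

lemma Bot_own: "corr \<kappa> (GP v Bot Q) \<Longrightarrow> owner M \<phi> (GP v Bot Q) \<noteq> P"
  by (cases "Prole Q") (auto simp: owner_GP_simps split: if_splits)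

lemma And_opp: "corr \<kappa> (GP v (And f g) Q) \<Longrightarrow> owner M \<phi> (GP v (And f g) Q) \<noteq> P \<Longrightarrow>
    p' \<in> moves M \<phi> (GP v (And f g) Q) \<Longrightarrow> corr \<kappa> p'"
  by (cases "Prole Q") (auto simp: owner_GP_simps)

lemma And_own: "corr \<kappa> (GP v (And f g) Q) \<Longrightarrow> owner M \<phi> (GP v (And f g) Q) = P \<Longrightarrow>
    \<exists>p'\<in>moves M \<phi> (GP v (And f g) Q). corr \<kappa> p'"
  by (cases "Prole Q") (auto simp: owner_GP_simps)

lemma Or_opp: "corr \<kappa> (GP v (Or f g) Q) \<Longrightarrow> owner M \<phi> (GP v (Or f g) Q) \<noteq> P \<Longrightarrow>
    p' \<in> moves M \<phi> (GP v (Or f g) Q) \<Longrightarrow> corr \<kappa> p'"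
  by (cases "Prole Q") (auto simp: owner_GP_simps)

lemma Or_own: "corr \<kappa> (GP v (Or f g) Q) \<Longrightarrow> owner M \<phi> (GP v (Or f g) Q) = P \<Longrightarrow>
    \<exists>p'\<in>moves M \<phi> (GP v (Or f g) Q). corr \<kappa> p'"
  by (cases "Prole Q") (auto simp: owner_GP_simps)

lemma Imp_opp: "corr \<kappa> (GP v (Imp f g) Q) \<Longrightarrow> owner M \<phi> (GP v (Imp f g) Q) \<noteq> P \<Longrightarrow>
    p' \<in> moves M \<phi> (GP v (Imp f g) Q) \<Longrightarrow> corr \<kappa> p'"
  by (cases "Prole Q") (auto simp: owner_GP_simps dest: ck_Le)

lemma Imp_own: assumes "corr \<kappa> (GP v (Imp f g) Q)" "owner M \<phi> (GP v (Imp f g) Q) = P"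
  shows "\<exists>p'\<in>moves M \<phi> (GP v (Imp f g) Q). corr \<kappa> p'"
proof -
  have R: "Prole Q = Refuter" using assms(2) by (simp add: owner_GP_simps)
  then have "v \<in> W" "v \<notin> sem M (rk \<kappa>) (Imp f g)" using assms(1) by auto
  then obtain u where u: "(v, u) \<in> mLe M" "u \<in> sem M (rk \<kappa>) f" "u \<notin> sem M (rk \<kappa>) g" by auto
  then have "corr \<kappa> (GImp u f g Q)" using R ck_Le by auto
  moreover have "GImp u f g Q \<in> moves M \<phi> (GP v (Imp f g) Q)" using u by auto
  ultimately show ?thesis by blast
qed

lemma Box_opp: assumes "corr \<kappa> (GP v (Box f) Q)" "owner M \<phi> (GP v (Box f) Q) \<noteq> P"
    "p' \<in> moves M \<phi> (GP v (Box f) Q)" shows "corr \<kappa> p'"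
proof -
  have R: "Prole Q = Verifier" using assms(2) by (cases "Prole Q") (simp_all add: owner_GP_simps)
  obtain u where u: "p' = GP u f Q" "(v, u) \<in> mLe M O mR M" using assms(3) by auto
  then have "u \<in> W" using ck_R by blast
  moreover have "u \<in> sem M (rk \<kappa>) f" using assms(1) R u by auto
  ultimately show ?thesis using u R by simp
qed

lemma Box_own: assumes "corr \<kappa> (GP v (Box f) Q)" "owner M \<phi> (GP v (Box f) Q) = P"
  shows "\<exists>p'\<in>moves M \<phi> (GP v (Box f) Q). corr \<kappa> p'"
proof -
  have R: "Prole Q = Refuter" using assms(2) by (simp add: owner_GP_simps)
  then have "v \<in> W" "v \<notin> sem M (rk \<kappa>) (Box f)" using assms(1) by auto
  then obtain u where u: "(v, u) \<in> mLe M O mR M" "u \<notin> sem M (rk \<kappa>) f" by auto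
  then have "corr \<kappa> (GP u f Q)" using R ck_R by auto
  moreover have "GP u f Q \<in> moves M \<phi> (GP v (Box f) Q)" using u by auto
  ultimately show ?thesis by blast
qed

lemma Dia_opp: "corr \<kappa> (GP v (Dia f) Q) \<Longrightarrow> owner M \<phi> (GP v (Dia f) Q) \<noteq> P \<Longrightarrow>
    p' \<in> moves M \<phi> (GP v (Dia f) Q) \<Longrightarrow> corr \<kappa> p'"
  by (cases "Prole Q") (auto simp: owner_GP_simps dest: ck_Le)

lemma Dia_own: assumes "corr \<kappa> (GP v (Dia f) Q)" "owner M \<phi> (GP v (Dia f) Q) = P"
  shows "\<exists>p'\<in>moves M \<phi> (GP v (Dia f) Q). corr \<kappa> p'"
proof -
  have R: "Prole Q = Refuter" using assms(2) by (simp add: owner_GP_simps)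
  then have "v \<in> W" "v \<notin> sem M (rk \<kappa>) (Dia f)" using assms(1) by auto
  then obtain u where u: "(v, u) \<in> mLe M" "\<not> (\<exists>x. (u, x) \<in> mR M \<and> x \<in> sem M (rk \<kappa>) f)" by auto
  then have "corr \<kappa> (GDia u f Q)" using R ck_Le by auto
  moreover have "GDia u f Q \<in> moves M \<phi> (GP v (Dia f) Q)" using u by auto
  ultimately show ?thesis by blast
qed

lemma GDia_opp: "corr \<kappa> (GDia v f Q) \<Longrightarrow> owner M \<phi> (GDia v f Q) \<noteq> P \<Longrightarrow>
    p' \<in> moves M \<phi> (GDia v f Q) \<Longrightarrow> corr \<kappa> p'"
  by (cases "Prole Q") (auto simp: owner_GP_simps dest: ck_R)

lemma GDia_own: assumes "corr \<kappa> (GDia v f Q)" "owner M \<phi> (GDia v f Q) = P"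
  shows "\<exists>p'\<in>moves M \<phi> (GDia v f Q). corr \<kappa> p'"
proof -
  have R: "Prole Q = Verifier" using assms(2) by (simp add: owner_GP_simps)
  then obtain u where u: "(v, u) \<in> mR M" "u \<in> sem M (rk \<kappa>) f" using assms(1) by auto
  then have "corr \<kappa> (GP u f Q)" using R ck_R by auto
  moreover have "GP u f Q \<in> moves M \<phi> (GDia v f Q)" using u by auto
  ultimately show ?thesis by blast
qed

lemma GImp_opp: "corr \<kappa> (GImp v f g Q) \<Longrightarrow> owner M \<phi> (GImp v f g Q) \<noteq> P \<Longrightarrow>
    p' \<in> moves M \<phi> (GImp v f g Q) \<Longrightarrow> corr \<kappa> p'"
  by (cases "Prole Q") (auto simp: owner_GP_simps Prole_dual)

lemma GImp_own: "corr \<kappa> (GImp v f g Q) \<Longrightarrow> owner M \<phi> (GImp v f g Q) = P \<Longrightarrow>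
    \<exists>p'\<in>moves M \<phi> (GImp v f g Q). corr \<kappa> p'"
  by (cases "Prole Q") (auto simp: owner_GP_simps Prole_dual)

end


context pl
begin

lemma Var_moves: assumes "Reach (GP v (Var X) Q)"
  shows "X \<in> V0" "moves M \<phi> (GP v (Var X) Q) = {GP v (B X) Q}"
proof -
  show X: "X \<in> V0" using Reach_Sub[OF assms] unfolding V0_def by simp
  show "moves M \<phi> (GP v (Var X) Q) = {GP v (B X) Q}"
  proof
    show "moves M \<phi> (GP v (Var X) Q) \<subseteq> {GP v (B X) Q}"
    proof
      fix p' assume "p' \<in> moves M \<phi> (GP v (Var X) Q)"
      then obtain F where F: "p' = GP v F Q" "F \<in> Sub \<phi>" "isbind X F" by (auto simp: isbind_def)
      then show "p' \<in> {GP v (B X) Q}" using B_eq[OF X F(2,3)] by simp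
    qed
  next
    have "B X \<in> Sub \<phi>" "isbind X (B X)" using B_props[OF X] by auto
    then show "{GP v (B X) Q} \<subseteq> moves M \<phi> (GP v (Var X) Q)" by (auto simp: isbind_def)
  qed
qed

lemma mu_nu_ne: "F = Mu X a \<Longrightarrow> F = Nu X b \<Longrightarrow> False"
  by simp

lemma bad_role: assumes "bad X" "Reach (GP v (B X) Q)"
  shows "(isMuB X \<longrightarrow> Prole Q = Verifier) \<and> (\<not> isMuB X \<longrightarrow> Prole Q = Refuter)"
proof -
  obtain v0 Q0 where r: "Reach (GP v0 (B X) Q0)" and c: "(Prole Q0 = Verifier \<and> isMuB X) \<or> (Prole Q0 = Refuter \<and> B X = Nu X (bdy (B X)))"
    and X: "X \<in> V0" using assms(1) unfolding bad_def by blast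
  have "Q0 = Q" using role_uniq[OF X r assms(2)] .
  then show ?thesis using c mu_nu_ne[of "B X" X "bdy (B X)" "bdy (B X)"] by auto
qed

lemma Var_corr: assumes r: "Reach (GP v (Var X) Q)" and c: "corr \<kappa> (GP v (Var X) Q)"
  shows "corr \<kappa> (GP v (B X) Q)"
proof -
  have X: "X \<in> V0" using Var_moves[OF r] by blast
  have rB: "Reach (GP v (B X) Q)" using Reach_step[OF r] Var_moves[OF r] by blast
  interpret A: appx lt W "GX X (rk \<kappa>)" by (rule GX_appx[OF X])
  show ?thesis
  proof (cases "bad X")
    case False
    then show ?thesis using c rk_nonbad[OF X False] by simp
  next
    case True
    show ?thesis
    proof (cases "isMuB X")
      case mu: True
      have R: "Prole Q = Verifier" using bad_role[OF True rB] mu by blast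
      then have "v \<in> rk \<kappa> X" using c by simp
      then have "v \<in> lfp_on W (GX X (rk \<kappa>))" using rk_bad_mu[OF X True mu] A.iterL_le_lfp by auto
      then show ?thesis using sem_B_mu[OF X mu] c R by simp
    next
      case nu: False
      have R: "Prole Q = Refuter" using bad_role[OF True rB] nu by blast
      then have "v \<notin> rk \<kappa> X" "v \<in> W" using c by auto
      then have "v \<notin> gfp_on W (GX X (rk \<kappa>))" using rk_bad_nu[OF X True nu] A.gfp_le_iterU by auto
      then show ?thesis using sem_B_nu[OF X nu] c R by simp
    qed
  qed
qed

lemma bind_moves: "isbind Y F \<Longrightarrow> moves M \<phi> (GP v F Q) = {GP v (bdy F) Q}"
  by (auto simp: isbind_def)

lemma bind_corr: assumes r: "Reach (GP v F Q)" and b: "isbind Y F" and c: "corr \<kappa> (GP v F Q)"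
  shows "\<exists>\<beta>. corr (\<kappa>(Y := \<beta>)) (GP v (bdy F) Q)"
proof (cases "Y \<in> V0")
  case False
  have FS: "F \<in> Sub \<phi>" using Reach_Sub[OF r] by simp
  have nf: "Y \<notin> free_vars (bdy F)"
  proof
    assume "Y \<in> free_vars (bdy F)"
    then have "Var Y \<in> Sub (bdy F)" by (rule fv_Sub)
    then have "Var Y \<in> Sub \<phi>" using Sub_trans[OF _ Sub_trans[OF bdy_Sub[OF b] FS]] by blast
    then show False using False unfolding V0_def by simp
  qed
  obtain g where g: "F = Mu Y g \<or> F = Nu Y g" using b unfolding isbind_def by blast
  then have bg: "bdy F = g" by auto
  have e: "(\<lambda>A. sem M ((rk \<kappa>)(Y := A)) g) = (\<lambda>A. sem M (rk \<kappa>) g)"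
    by (rule ext, rule sem_fv) (use nf bg in auto)
  have "sem M (rk \<kappa>) F = sem M (rk \<kappa>) g"
    using g
  proof (elim disjE)
    assume F: "F = Mu Y g"
    show ?thesis by (simp only: F sem.simps e lfp_const[OF sem_sub_W])
  next
    assume F: "F = Nu Y g"
    show ?thesis by (simp only: F sem.simps e gfp_const[OF sem_sub_W])
  qed
  then have "sem M (rk \<kappa>) F = sem M (rk \<kappa>) (bdy F)" using bg by simp
  then have "corr (\<kappa>(Y := \<kappa> Y)) (GP v (bdy F) Q)" using c by simp
  then show ?thesis by blast
next
  case Y: True
  have FS: "F \<in> Sub \<phi>" using Reach_Sub[OF r] by simp
  have FB: "F = B Y" using B_eq[OF Y FS b] by simp
  interpret A: appx lt W "GX Y (rk \<kappa>)" by (rule GX_appx[OF Y])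
  show ?thesis
  proof (cases "bad Y")
    case False
    have "sem M (rk \<kappa>) (bdy (B Y)) = sem M (rk \<kappa>) (B Y)"
    proof (cases "isMuB Y")
      case True
      then show ?thesis using sem_bdy rk_nonbad[OF Y False] sem_B_mu[OF Y True] A.lfp_fix by simp
    next
      case nu: False
      then show ?thesis using sem_bdy rk_nonbad[OF Y False] sem_B_nu[OF Y nu] A.gfp_fix by simp
    qed
    then have "corr (\<kappa>(Y := \<kappa> Y)) (GP v (bdy F) Q)" using c FB by simp
    then show ?thesis by blast
  next
    case bad: True
    have rB: "Reach (GP v (B Y) Q)" using r FB by simp
    show ?thesis
    proof (cases "isMuB Y")
      case mu: True
      have R: "Prole Q = Verifier" using bad_role[OF bad rB] mu by blast
      then have "v \<in> lfp_on W (GX Y (rk \<kappa>))" using c FB sem_B_mu[OF Y mu] by simp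
      then obtain \<beta> where \<beta>: "v \<in> GX Y (rk \<kappa>) (iterL lt (GX Y (rk \<kappa>)) \<beta>)" using A.lfp_reach by blast
      let ?k = "\<kappa>(Y := \<beta>)"
      have ag: "GX Y (rk ?k) = GX Y (rk \<kappa>)" by (rule GX_agree[OF Y]) auto
      have "rk ?k Y = iterL lt (GX Y (rk \<kappa>)) \<beta>" using rk_bad_mu[OF Y bad mu, of ?k] ag by simp
      then have "v \<in> sem M (rk ?k) (bdy (B Y))" using sem_bdy[of ?k Y] ag \<beta> by simp
      then have "corr ?k (GP v (bdy F) Q)" using c R FB by simp
      then show ?thesis by blast
    next
      case nu: False
      have R: "Prole Q = Refuter" using bad_role[OF bad rB] nu by blast
      then have vW: "v \<in> W" and "v \<notin> gfp_on W (GX Y (rk \<kappa>))" using c FB sem_B_nu[OF Y nu] by auto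
      then obtain \<beta> where \<beta>: "v \<notin> GX Y (rk \<kappa>) (iterU lt W (GX Y (rk \<kappa>)) \<beta>)" using A.gfp_reach by blast
      let ?k = "\<kappa>(Y := \<beta>)"
      have ag: "GX Y (rk ?k) = GX Y (rk \<kappa>)" by (rule GX_agree[OF Y]) auto
      have "rk ?k Y = iterU lt W (GX Y (rk \<kappa>)) \<beta>" using rk_bad_nu[OF Y bad nu, of ?k] ag by simp
      then have "v \<notin> sem M (rk ?k) (bdy (B Y))" using sem_bdy[of ?k Y] ag \<beta> by simp
      then have "corr ?k (GP v (bdy F) Q)" using vW R FB by simp
      then show ?thesis by blast
    qed
  qed
qed

lemma cyc: assumes r: "Reach (GP v (Var X) Q)" and bad: "bad X" and c: "corr \<kappa> (GP v (Var X) Q)"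
  shows "\<exists>\<beta>. (\<beta>, \<kappa> X) \<in> lt \<and> (\<forall>\<kappa>1. (\<forall>Z'\<in>V0. size (B X) < size (B Z') \<longrightarrow> \<kappa>1 Z' = \<kappa> Z')
            \<longrightarrow> corr (\<kappa>1(X := \<beta>)) (GP v (bdy (B X)) Q))"
proof -
  have X: "X \<in> V0" using Var_moves[OF r] by blast
  have rB: "Reach (GP v (B X) Q)" using Reach_step[OF r] Var_moves[OF r] by blast
  interpret A: appx lt W "GX X (rk \<kappa>)" by (rule GX_appx[OF X])
  have vW: "v \<in> W" using c by simp
  show ?thesis
  proof (cases "isMuB X")
    case mu: True
    have R: "Prole Q = Verifier" using bad_role[OF bad rB] mu by blast
    then have "v \<in> iterL lt (GX X (rk \<kappa>)) (\<kappa> X)" using c rk_bad_mu[OF X bad mu] by simp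
    then obtain \<beta> where \<beta>: "(\<beta>, \<kappa> X) \<in> lt" "v \<in> GX X (rk \<kappa>) (iterL lt (GX X (rk \<kappa>)) \<beta>)"
      using A.iterL_mem by blast
    have "corr (\<kappa>1(X := \<beta>)) (GP v (bdy (B X)) Q)"
      if ag0: "\<forall>Z'\<in>V0. size (B X) < size (B Z') \<longrightarrow> \<kappa>1 Z' = \<kappa> Z'" for \<kappa>1
    proof -
      let ?k = "\<kappa>1(X := \<beta>)"
      have ag: "GX X (rk ?k) = GX X (rk \<kappa>)" by (rule GX_agree[OF X]) (use ag0 in auto)
      have "rk ?k X = iterL lt (GX X (rk \<kappa>)) \<beta>" using rk_bad_mu[OF X bad mu, of ?k] ag by simp
      then have "v \<in> sem M (rk ?k) (bdy (B X))" using sem_bdy[of ?k X] ag \<beta> by simp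
      then show ?thesis using vW R by simp
    qed
    then show ?thesis using \<beta> by blast
  next
    case nu: False
    have R: "Prole Q = Refuter" using bad_role[OF bad rB] nu by blast
    then have "v \<notin> iterU lt W (GX X (rk \<kappa>)) (\<kappa> X)" using c rk_bad_nu[OF X bad nu] by simp
    then obtain \<beta> where \<beta>: "(\<beta>, \<kappa> X) \<in> lt" "v \<notin> GX X (rk \<kappa>) (iterU lt W (GX X (rk \<kappa>)) \<beta>)"
      using A.iterU_mem vW by blast
    have "corr (\<kappa>1(X := \<beta>)) (GP v (bdy (B X)) Q)"
      if ag0: "\<forall>Z'\<in>V0. size (B X) < size (B Z') \<longrightarrow> \<kappa>1 Z' = \<kappa> Z'" for \<kappa>1
    proof -
      let ?k = "\<kappa>1(X := \<beta>)"
      have ag: "GX X (rk ?k) = GX X (rk \<kappa>)" by (rule GX_agree[OF X]) (use ag0 in auto)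
      have "rk ?k X = iterU lt W (GX X (rk \<kappa>)) \<beta>" using rk_bad_nu[OF X bad nu, of ?k] ag by simp
      then have "v \<notin> sem M (rk ?k) (bdy (B X))" using sem_bdy[of ?k X] ag \<beta> by simp
      then show ?thesis using vW R by simp
    qed
    then show ?thesis using \<beta> by blast
  qed
qed

end


lemma least_list:
  assumes wf: "wf r" and tot: "\<And>a b. a \<noteq> b \<Longrightarrow> (a, b) \<in> r \<or> (b, a) \<in> r"
    and S: "z0 \<in> S" and len: "\<And>z. z \<in> S \<Longrightarrow> length z = n"
  shows "\<exists>z\<in>S. \<forall>y\<in>S. lle r z y"
proof -
  have "\<exists>z\<in>S. \<forall>y. (y, z) \<in> {(as, bs). length as = n \<and> length bs = n \<and> llt r as bs} \<longrightarrow> y \<notin> S"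
    using wf_llt[OF wf, of n] S unfolding wf_eq_minimal by blast
  then obtain z where z: "z \<in> S" "\<And>y. y \<in> S \<Longrightarrow> \<not> llt r y z" using len by blast
  have "lle r z y" if "y \<in> S" for y
    using llt_total[of r z y, OF tot] len[OF z(1)] len[OF that] z(2)[OF that] unfolding lle_def by auto
  then show ?thesis using z by blast
qed

context pl
begin

lemma finite_V0: "finite V0"
proof -
  have "(Var :: 'v \<Rightarrow> ('p, 'v) fm) ` V0 \<subseteq> Sub \<phi>" unfolding V0_def by auto
  then have "finite ((Var :: 'v \<Rightarrow> ('p, 'v) fm) ` V0)" using finite_Sub[of \<phi>] by (rule finite_subset)
  then show ?thesis by (rule finite_imageD) (auto simp: inj_on_def)
qed

lemma xs_exists: "\<exists>l. set l = V0 \<and> distinct l \<and>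
   (\<forall>i j. i < length l \<longrightarrow> j < length l \<longrightarrow> size (B (l ! j)) < size (B (l ! i)) \<longrightarrow> i < j)"
proof -
  obtain l0 where l0: "set l0 = V0" "distinct l0" using finite_distinct_list[OF finite_V0] by blast
  define f where "f Y = size \<phi> - size (B Y)" for Y
  define l where "l = sort_key f l0"
  have sl: "set l = V0" "distinct l" using l0 unfolding l_def by auto
  have so: "sorted (map f l)" unfolding l_def by simp
  have bnd: "size (B Y) \<le> size \<phi>" if "Y \<in> V0" for Y using Sub_size B_props(1)[OF that] by blast
  have "i < j" if ij: "i < length l" "j < length l" "size (B (l ! j)) < size (B (l ! i))" for i j
  proof (rule ccontr)
    assume "\<not> i < j"
    then have "j \<le> i" by simp
    then have "f (l ! j) \<le> f (l ! i)" using sorted_nth_mono[OF so] ij by simp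
    moreover have "l ! i \<in> V0" "l ! j \<in> V0" using ij sl nth_mem by blast+
    ultimately show False using bnd ij(3) unfolding f_def by fastforce
  qed
  then show ?thesis using sl by blast
qed

definition xs :: "'v list" where
  "xs = (SOME l. set l = V0 \<and> distinct l \<and>
   (\<forall>i j. i < length l \<longrightarrow> j < length l \<longrightarrow> size (B (l ! j)) < size (B (l ! i)) \<longrightarrow> i < j))"

lemma xs_props: "set xs = V0" "distinct xs"
  "\<And>i j. i < length xs \<Longrightarrow> j < length xs \<Longrightarrow> size (B (xs ! j)) < size (B (xs ! i)) \<Longrightarrow> i < j"
  using someI_ex[OF xs_exists] unfolding xs_def[symmetric] by blast+

definition T :: "('v \<Rightarrow> 'w set set) \<Rightarrow> 'w set set list" where
  "T \<kappa> = map \<kappa> xs"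

lemma least_kappa: assumes "Pr \<kappa>0" shows "\<exists>\<kappa>. Pr \<kappa> \<and> (\<forall>\<kappa>'. Pr \<kappa>' \<longrightarrow> lle lt (T \<kappa>) (T \<kappa>'))"
proof -
  have "\<exists>z\<in>T ` {\<kappa>. Pr \<kappa>}. \<forall>y\<in>T ` {\<kappa>. Pr \<kappa>}. lle lt z y"
    by (rule least_list[OF wf_lt total_lt, of "T \<kappa>0" _ "length xs"]) (use assms in \<open>auto simp: T_def\<close>)
  then show ?thesis by blast
qed

definition sig :: "('w, 'p, 'v) gpos \<Rightarrow> ('v \<Rightarrow> 'w set set)" where
  "sig p = (SOME \<kappa>. corr \<kappa> p \<and> (\<forall>\<kappa>'. corr \<kappa>' p \<longrightarrow> lle lt (T \<kappa>) (T \<kappa>')))"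

lemma sig_props: assumes "corr \<kappa> p"
  shows "corr (sig p) p" "\<And>\<kappa>'. corr \<kappa>' p \<Longrightarrow> lle lt (T (sig p)) (T \<kappa>')"
proof -
  have ex: "\<exists>\<kappa>. corr \<kappa> p \<and> (\<forall>\<kappa>'. corr \<kappa>' p \<longrightarrow> lle lt (T \<kappa>) (T \<kappa>'))"
    by (rule least_kappa[of "\<lambda>\<kappa>. corr \<kappa> p"]) (rule assms)
  show "corr (sig p) p" using someI_ex[OF ex] unfolding sig_def[symmetric] by blast
  show "\<And>\<kappa>'. corr \<kappa>' p \<Longrightarrow> lle lt (T (sig p)) (T \<kappa>')" using someI_ex[OF ex] unfolding sig_def[symmetric] by blast
qed

abbreviation okp :: "('w, 'p, 'v) gpos \<Rightarrow> bool" where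
  "okp p \<equiv> \<exists>\<kappa>. corr \<kappa> p"

definition tau :: "('w, 'p, 'v) gpos \<Rightarrow> ('w, 'p, 'v) gpos" where
  "tau p = (if \<exists>p'\<in>moves M \<phi> p. okp p'
     then (SOME p'. p' \<in> moves M \<phi> p \<and> okp p' \<and> (\<forall>p''\<in>moves M \<phi> p. okp p'' \<longrightarrow> lle lt (T (sig p')) (T (sig p''))))
     else (SOME p'. p' \<in> moves M \<phi> p))"

lemma tau_good: assumes "\<exists>p'\<in>moves M \<phi> p. okp p'"
  shows "tau p \<in> moves M \<phi> p" "okp (tau p)" "\<And>p''. p'' \<in> moves M \<phi> p \<Longrightarrow> okp p'' \<Longrightarrow> lle lt (T (sig (tau p))) (T (sig p''))"
proof -
  obtain p0 where p0: "p0 \<in> moves M \<phi> p" "okp p0" using assms by blast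
  have "\<exists>z\<in>(\<lambda>p'. T (sig p')) ` {p' \<in> moves M \<phi> p. okp p'}. \<forall>y\<in>(\<lambda>p'. T (sig p')) ` {p' \<in> moves M \<phi> p. okp p'}. lle lt z y"
    by (rule least_list[OF wf_lt total_lt, of "T (sig p0)" _ "length xs"]) (use p0 in \<open>auto simp: T_def\<close>)
  then have ex: "\<exists>p'. p' \<in> moves M \<phi> p \<and> okp p' \<and> (\<forall>p''\<in>moves M \<phi> p. okp p'' \<longrightarrow> lle lt (T (sig p')) (T (sig p'')))"
    by blast
  have "tau p = (SOME p'. p' \<in> moves M \<phi> p \<and> okp p' \<and> (\<forall>p''\<in>moves M \<phi> p. okp p'' \<longrightarrow> lle lt (T (sig p')) (T (sig p''))))"
    using assms unfolding tau_def by simp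
  then have "tau p \<in> moves M \<phi> p \<and> okp (tau p) \<and> (\<forall>p''\<in>moves M \<phi> p. okp p'' \<longrightarrow> lle lt (T (sig (tau p))) (T (sig p'')))"
    using someI_ex[OF ex] by simp
  then show "tau p \<in> moves M \<phi> p" "okp (tau p)" "\<And>p''. p'' \<in> moves M \<phi> p \<Longrightarrow> okp p'' \<Longrightarrow> lle lt (T (sig (tau p))) (T (sig p''))"
    by blast+
qed

lemma tau_moves: "moves M \<phi> p \<noteq> {} \<Longrightarrow> tau p \<in> moves M \<phi> p"
proof -
  assume ne: "moves M \<phi> p \<noteq> {}"
  show ?thesis
  proof (cases "\<exists>p'\<in>moves M \<phi> p. okp p'")
    case True then show ?thesis using tau_good by blast
  next
    case False
    then show ?thesis unfolding tau_def using ne some_in_eq by auto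
  qed
qed

lemma tau_strategy: "strategy M \<phi> P tau"
  unfolding strategy_def using tau_moves by blast

definition isVarp :: "('w, 'p, 'v) gpos \<Rightarrow> bool" where
  "isVarp p \<longleftrightarrow> (\<exists>v X Q. p = GP v (Var X) Q)"

definition isBindp :: "('w, 'p, 'v) gpos \<Rightarrow> bool" where
  "isBindp p \<longleftrightarrow> (\<exists>v F Q Y. p = GP v F Q \<and> isbind Y F)"

lemma ord_step:
  assumes "Reach p" "corr \<kappa> p" "\<not> isVarp p" "\<not> isBindp p"
  shows "(owner M \<phi> p \<noteq> P \<longrightarrow> (\<forall>p'\<in>moves M \<phi> p. corr \<kappa> p')) \<and> (owner M \<phi> p = P \<longrightarrow> (\<exists>p'\<in>moves M \<phi> p. corr \<kappa> p'))"
proof (cases p)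
  case (GP v f Q)
  show ?thesis
  proof (cases f)
    case (Prop A) then show ?thesis using GP assms Prop_own by auto
  next
    case Bot then show ?thesis using GP assms Bot_own by auto
  next
    case (Var X) then show ?thesis using GP assms unfolding isVarp_def by auto
  next
    case (And g h) then show ?thesis using GP assms And_own And_opp by blast
  next
    case (Or g h) then show ?thesis using GP assms Or_own Or_opp by blast
  next
    case (Imp g h) then show ?thesis using GP assms Imp_own Imp_opp by blast
  next
    case (Box g) then show ?thesis using GP assms Box_own Box_opp by blast
  next
    case (Dia g) then show ?thesis using GP assms Dia_own Dia_opp by blast
  next
    case (Mu X g) then show ?thesis using GP assms unfolding isBindp_def by auto
  next
    case (Nu X g) then show ?thesis using GP assms unfolding isBindp_def by auto
  qed
next
  case (GDia v f Q) then show ?thesis using assms GDia_own GDia_opp by blast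
next
  case (GImp v f g Q) then show ?thesis using assms GImp_own GImp_opp by blast
qed

lemma dead_end: assumes "Reach p" "corr \<kappa> p" "moves M \<phi> p = {}" shows "owner M \<phi> p \<noteq> P"
proof -
  have "\<not> isVarp p"
  proof
    assume "isVarp p"
    then obtain v X Q where p: "p = GP v (Var X) Q" unfolding isVarp_def by blast
    have "moves M \<phi> p = {GP v (B X) Q}" using Var_moves(2)[OF assms(1)[unfolded p]] p by simp
    then show False using assms(3) by simp
  qed
  moreover have "\<not> isBindp p"
  proof
    assume "isBindp p"
    then obtain v F Q Y where p: "p = GP v F Q" "isbind Y F" unfolding isBindp_def by blast
    have "moves M \<phi> p = {GP v (bdy F) Q}" using bind_moves[OF p(2)] p by simp
    then show False using assms(3) by simp
  qed
  ultimately show ?thesis using ord_step[OF assms(1,2)] assms(3) by blast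
qed

lemma step:
  assumes r: "Reach p" and ok: "okp p" and mv: "p' \<in> moves M \<phi> p" and fol: "owner M \<phi> p = P \<longrightarrow> p' = tau p"
  shows "okp p'"
    "\<not> isBindp p \<Longrightarrow> lle lt (T (sig p')) (T (sig p))"
    "\<And>v F Q Y. p = GP v F Q \<Longrightarrow> isbind Y F \<Longrightarrow> \<exists>\<beta>. lle lt (T (sig p')) (T ((sig p)(Y := \<beta>)))"
proof -
  obtain \<kappa>0 where "corr \<kappa>0 p" using ok by blast
  then have cs: "corr (sig p) p" using sig_props by blast
  have main: "okp p' \<and> (\<not> isBindp p \<longrightarrow> lle lt (T (sig p')) (T (sig p))) \<and>
    (\<forall>v F Q Y. p = GP v F Q \<longrightarrow> isbind Y F \<longrightarrow> (\<exists>\<beta>. lle lt (T (sig p')) (T ((sig p)(Y := \<beta>)))))"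
  proof (cases "isVarp p")
    case True
    then obtain v X Q where p: "p = GP v (Var X) Q" unfolding isVarp_def by blast
    have mvs: "moves M \<phi> p = {GP v (B X) Q}" unfolding p by (rule Var_moves(2)[OF r[unfolded p]])
    have p': "p' = GP v (B X) Q" using mv unfolding mvs by blast
    have c': "corr (sig p) p'" using Var_corr[OF r[unfolded p]] cs p p' by simp
    have nb: "\<not> (\<exists>Y. isbind Y (Var X))" by simp
    show ?thesis using sig_props(2)[OF c'] c' p nb by auto
  next
    case nv: False
    show ?thesis
    proof (cases "isBindp p")
      case True
      then obtain v F Q Y where p: "p = GP v F Q" "isbind Y F" unfolding isBindp_def by blast
      have mvs: "moves M \<phi> p = {GP v (bdy F) Q}" unfolding p(1) by (rule bind_moves[OF p(2)])
      have p': "p' = GP v (bdy F) Q" using mv unfolding mvs by blast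
      obtain \<beta> where c': "corr ((sig p)(Y := \<beta>)) p'" using bind_corr[OF r[unfolded p(1)] p(2)] cs p p' by blast
      have uniq: "Y' = Y" if "isbind Y' F" for Y' using that p(2) by (auto simp: isbind_def)
      show ?thesis using sig_props(2)[OF c'] c' p True uniq by blast
    next
      case nb: False
      have os: "(owner M \<phi> p \<noteq> P \<longrightarrow> (\<forall>p'\<in>moves M \<phi> p. corr (sig p) p')) \<and> (owner M \<phi> p = P \<longrightarrow> (\<exists>p'\<in>moves M \<phi> p. corr (sig p) p'))"
        by (rule ord_step[OF r cs nv nb])
      have "okp p' \<and> lle lt (T (sig p')) (T (sig p))"
      proof (cases "owner M \<phi> p = P")
        case True
        then obtain p'' where p'': "p'' \<in> moves M \<phi> p" "corr (sig p) p''" using os by blast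
        have tg: "\<exists>p'\<in>moves M \<phi> p. okp p'" using p'' by blast
        have "lle lt (T (sig (tau p))) (T (sig p''))" using tau_good(3)[OF tg p''(1)] p'' by blast
        moreover have "lle lt (T (sig p'')) (T (sig p))" using sig_props(2)[OF p''(2) p''(2)] .
        ultimately have "lle lt (T (sig (tau p))) (T (sig p))" using lle_trans[OF trans_lt] by blast
        then show ?thesis using fol True tau_good(2)[OF tg] by simp
      next
        case False
        then have "corr (sig p) p'" using os mv by blast
        then show ?thesis using sig_props(2) by blast
      qed
      then show ?thesis using nb unfolding isBindp_def by blast
    qed
  qed
  show "okp p'" using main by blast
  show "\<not> isBindp p \<Longrightarrow> lle lt (T (sig p')) (T (sig p))" using main by blast
  show "\<And>v F Q Y. p = GP v F Q \<Longrightarrow> isbind Y F \<Longrightarrow> \<exists>\<beta>. lle lt (T (sig p')) (T ((sig p)(Y := \<beta>)))"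
    using main by blast
qed

end


lemma first_exit: "Pr a \<Longrightarrow> \<not> Pr b \<Longrightarrow> a \<le> b \<Longrightarrow> \<exists>k\<ge>a. k < b \<and> Pr k \<and> \<not> Pr (Suc k)"
proof (induction b)
  case 0 then show ?case by simp
next
  case (Suc b)
  show ?case
  proof (cases "Pr b")
    case True then show ?thesis using Suc by (metis le_SucE lessI)
  next
    case False
    then have "a \<le> b" using Suc by (metis le_SucE)
    then show ?thesis using Suc.IH[OF Suc.prems(1) False] by (meson less_SucI)
  qed
qed

lemma inf_unbounded: "infinite (S :: nat set) \<longleftrightarrow> (\<forall>m. \<exists>n\<ge>m. n \<in> S)"
proof
  assume "infinite S"
  then have "\<not> (\<exists>m. \<forall>n\<in>S. n \<le> m)" using finite_nat_set_iff_bounded_le by blast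
  then show "\<forall>m. \<exists>n\<ge>m. n \<in> S" using nat_le_linear by blast
next
  assume a: "\<forall>m. \<exists>n\<ge>m. n \<in> S"
  show "infinite S"
  proof
    assume "finite S"
    then obtain m where "\<forall>n\<in>S. n \<le> m" using finite_nat_set_iff_bounded_le by blast
    moreover obtain n where "n \<ge> Suc m" "n \<in> S" using a by blast
    ultimately show False by fastforce
  qed
qed

fun mes :: "('w, 'p, 'v) gpos \<Rightarrow> nat" where
  "mes (GP v f Q) = 2 * size f + 1"
| "mes (GDia v f Q) = 2 * size (Dia f)"
| "mes (GImp v f g Q) = 2 * size (Imp f g)"

context pl
begin

lemma mes_dec: "p' \<in> moves M \<phi> p \<Longrightarrow> \<not> isVarp p \<Longrightarrow> mes p' < mes p"
  by (cases p rule: mes.cases; cases "pf p") (auto simp: isVarp_def)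

lemma mv_sub: "p' \<in> moves M \<phi> p \<Longrightarrow> \<not> isVarp p \<Longrightarrow>
  pf p' \<in> Sub (pf p) \<and> (pf p' = pf p \<longrightarrow> (\<exists>v f g Q. p' = GImp v f g Q) \<or> (\<exists>v f Q. p' = GDia v f Q))"
  by (cases p rule: mes.cases; cases "pf p") (auto simp: isVarp_def)

end

locale run = pl M w \<phi> P for M :: "('w, 'p) ck_struct" and w and \<phi> :: "('p, 'v) fm" and P +
  fixes r :: "nat \<Rightarrow> ('w, 'p, 'v) gpos"
  assumes r0: "r 0 = init_pos w \<phi>" and rstep: "\<And>n. r (Suc n) \<in> moves M \<phi> (r n)"
    and rfol: "inf_follows M \<phi> P tau r" and rok0: "okp (r 0)"
begin

lemma r_reach_ok: "Reach (r n) \<and> okp (r n)"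
proof (induction n)
  case 0 then show ?case using r0 rok0 Reach_init unfolding init_pos_def by simp
next
  case (Suc n)
  have "Reach (r (Suc n))" using Reach_step Suc rstep by blast
  moreover have "okp (r (Suc n))"
    using step(1)[of "r n" "r (Suc n)"] Suc rstep rfol unfolding inf_follows_def by blast
  ultimately show ?case by blast
qed

lemma r_reach: "Reach (r n)" and r_ok: "okp (r n)"
  using r_reach_ok by blast+

lemma r_fol: "owner M \<phi> (r n) = P \<longrightarrow> r (Suc n) = tau (r n)"
  using rfol unfolding inf_follows_def by blast

lemma r_var_next: assumes rn: "r n = GP v (Var X) Q" shows "r (Suc n) = GP v (B X) Q \<and> X \<in> V0"
proof -
  have R: "Reach (GP v (Var X) Q)" using r_reach[of n] rn by simp
  have "r (Suc n) \<in> {GP v (B X) Q}" using rstep[of n] unfolding rn Var_moves(2)[OF R] .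
  then show ?thesis using Var_moves(1)[OF R] by simp
qed

lemma inf_var: "infinite {n. isVarp (r n)}"
proof
  assume fin: "finite {n. isVarp (r n)}"
  then obtain N where N: "\<And>n. isVarp (r n) \<Longrightarrow> n < N"
    by (metis finite_nat_set_iff_bounded mem_Collect_eq)
  have "mes (r (N + k)) + k \<le> mes (r N)" for k
  proof (induction k)
    case 0 then show ?case by simp
  next
    case (Suc k)
    have "\<not> isVarp (r (N + k))" using N by fastforce
    then have "mes (r (Suc (N + k))) < mes (r (N + k))" using mes_dec rstep by blast
    then show ?case using Suc by simp
  qed
  from this[of "Suc (mes (r N))"] show False by simp
qed

definition Vt :: "'v \<Rightarrow> nat set" where
  "Vt X = {n. \<exists>v Q. r n = GP v (Var X) Q}"

lemma Vt_regen: "X \<in> V0 \<Longrightarrow> {n. \<exists>v Y Q. r n = GP v (Var Y) Q \<and> r (Suc n) = GP v (B X) Q} = Vt X"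
proof (intro set_eqI iffI)
  fix n assume X: "X \<in> V0" and "n \<in> {n. \<exists>v Y Q. r n = GP v (Var Y) Q \<and> r (Suc n) = GP v (B X) Q}"
  then obtain v Y Q where n: "r n = GP v (Var Y) Q" "r (Suc n) = GP v (B X) Q" by blast
  then have "B Y = B X" "Y \<in> V0" using r_var_next by auto
  then have "Y = X" using B_props(2)[OF X] B_props(2)[of Y] by (auto simp: isbind_def)
  then show "n \<in> Vt X" using n unfolding Vt_def by blast
next
  fix n assume "X \<in> V0" "n \<in> Vt X"
  then show "n \<in> {n. \<exists>v Y Q. r n = GP v (Var Y) Q \<and> r (Suc n) = GP v (B X) Q}"
    unfolding Vt_def using r_var_next by blast
qed

lemma inf_regen_iff: "X \<in> V0 \<Longrightarrow> inf_regen r (B X) \<longleftrightarrow> infinite (Vt X)"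
  unfolding inf_regen_def using Vt_regen by simp

lemma regen_is_B: assumes "inf_regen r F" shows "\<exists>X\<in>V0. F = B X"
proof -
  have "{n. \<exists>v X Q. r n = GP v (Var X) Q \<and> r (Suc n) = GP v F Q} \<noteq> {}"
    using assms unfolding inf_regen_def by (metis finite.emptyI)
  then obtain n v X Q where "r n = GP v (Var X) Q" "r (Suc n) = GP v F Q" by blast
  then show ?thesis using r_var_next by fastforce
qed

lemma var_union: "{n. isVarp (r n)} = (\<Union>X\<in>V0. Vt X)"
proof (intro set_eqI iffI)
  fix n assume "n \<in> {n. isVarp (r n)}"
  then obtain v X Q where "r n = GP v (Var X) Q" unfolding isVarp_def by blast
  then show "n \<in> (\<Union>X\<in>V0. Vt X)" using r_var_next unfolding Vt_def by blast
next
  fix n assume "n \<in> (\<Union>X\<in>V0. Vt X)"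
  then show "n \<in> {n. isVarp (r n)}" unfolding Vt_def isVarp_def by blast
qed

definition Sr :: "'v set" where "Sr = {X \<in> V0. infinite (Vt X)}"

lemma Sr_ne: "Sr \<noteq> {}"
proof
  assume "Sr = {}"
  then have "\<forall>X\<in>V0. finite (Vt X)" unfolding Sr_def by blast
  then have "finite (\<Union>X\<in>V0. Vt X)" using finite_V0 by blast
  then show False using inf_var var_union by simp
qed

lemma Sr_fin: "finite Sr"
  using finite_V0 unfolding Sr_def by simp

lemma pf_r_Sub: "pf (r n) \<in> Sub \<phi>"
  using Reach_Sub r_reach by blast

end


context run
begin

lemma exit_step: assumes "pf (r k) \<in> Sub F" "pf (r (Suc k)) \<notin> Sub F" "F \<in> Sub \<phi>"
  shows "\<exists>v Z Q. r k = GP v (Var Z) Q \<and> size F < size (B Z)"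
proof (cases "isVarp (r k)")
  case True
  then obtain v Z Q where rk: "r k = GP v (Var Z) Q" unfolding isVarp_def by blast
  then have nx: "r (Suc k) = GP v (B Z) Q" "Z \<in> V0" using r_var_next by auto
  have "size F < size (B Z)" using exit_size[OF assms(3)] assms(1,2) rk nx by simp
  then show ?thesis using rk by blast
next
  case False
  then have "pf (r (Suc k)) \<in> Sub (pf (r k))" using mv_sub rstep by blast
  then show ?thesis using assms Sub_trans by blast
qed

lemma outermost_exists: "\<exists>X\<in>Sr. \<forall>Y\<in>Sr. B Y \<in> Sub (B X)"
proof -
  obtain X0 where X0: "X0 \<in> Sr" "\<And>Y. Y \<in> Sr \<Longrightarrow> size (B Y) \<le> size (B X0)"
  proof -
    let ?m = "Max ((\<lambda>Y. size (B Y)) ` Sr)"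
    have "?m \<in> (\<lambda>Y. size (B Y)) ` Sr" using Max_in Sr_fin Sr_ne by blast
    then obtain X0 where "X0 \<in> Sr" "size (B X0) = ?m" by auto
    moreover have "\<And>Y. Y \<in> Sr \<Longrightarrow> size (B Y) \<le> ?m" using Sr_fin by simp
    ultimately show ?thesis using that by auto
  qed
  let ?F = "B X0"
  have X0V: "X0 \<in> V0" using X0 unfolding Sr_def by blast
  have FS: "?F \<in> Sub \<phi>" using B_props(1)[OF X0V] .
  have "B Y \<in> Sub ?F" if Y: "Y \<in> Sr" for Y
  proof (rule ccontr)
    assume nY: "B Y \<notin> Sub ?F"
    have YV: "Y \<in> V0" using Y unfolding Sr_def by blast
    let ?E = "{k. \<exists>v Z Q. r k = GP v (Var Z) Q \<and> size ?F < size (B Z)}"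
    have "\<exists>k\<ge>m. k \<in> ?E" for m
    proof -
      have "infinite (Vt X0)" using X0 unfolding Sr_def by blast
      then obtain n where n: "n \<ge> m" "n \<in> Vt X0" using inf_unbounded by blast
      then obtain v Q where rn: "r n = GP v (Var X0) Q" unfolding Vt_def by blast
      then have rn1: "r (Suc n) = GP v ?F Q" using r_var_next by blast
      have "infinite (Vt Y)" using Y unfolding Sr_def by blast
      then obtain m' where m': "m' \<ge> Suc n" "m' \<in> Vt Y" using inf_unbounded by blast
      then obtain v' Q' where "r m' = GP v' (Var Y) Q'" unfolding Vt_def by blast
      then have "r (Suc m') = GP v' (B Y) Q'" using r_var_next by blast
      then have out: "pf (r (Suc m')) \<notin> Sub ?F" using nY by simp
      have inn: "pf (r (Suc n)) \<in> Sub ?F" using rn1 by simp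
      obtain k where k: "k \<ge> Suc n" "k < Suc m'" "pf (r k) \<in> Sub ?F" "pf (r (Suc k)) \<notin> Sub ?F"
        using first_exit[of "\<lambda>k. pf (r k) \<in> Sub ?F", OF inn out] m' by auto
      then have "k \<in> ?E" using exit_step[OF k(3,4) FS] by blast
      moreover have "k \<ge> m" using k n by simp
      ultimately show ?thesis by blast
    qed
    then have infE: "infinite ?E" using inf_unbounded by blast
    have "?E \<subseteq> (\<Union>Z\<in>{Z\<in>V0. size ?F < size (B Z)}. Vt Z)"
    proof
      fix k assume "k \<in> ?E"
      then obtain v Z Q where "r k = GP v (Var Z) Q" "size ?F < size (B Z)" by blast
      then show "k \<in> (\<Union>Z\<in>{Z\<in>V0. size ?F < size (B Z)}. Vt Z)"
        using r_var_next unfolding Vt_def by blast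
    qed
    then have "infinite (\<Union>Z\<in>{Z\<in>V0. size ?F < size (B Z)}. Vt Z)" using infE finite_subset by blast
    then obtain Z where Z: "Z \<in> V0" "size ?F < size (B Z)" "infinite (Vt Z)" using finite_V0 by auto
    then have "Z \<in> Sr" unfolding Sr_def by blast
    then show False using X0(2) Z(2) by fastforce
  qed
  then show ?thesis using X0(1) by blast
qed

end


context pl
begin

lemma take_agree: assumes k: "k < length xs" "xs ! k = X" and eq: "take k (T \<kappa>1) = take k (T \<kappa>)"
  shows "\<forall>Z'\<in>V0. size (B X) < size (B Z') \<longrightarrow> \<kappa>1 Z' = \<kappa> Z'"
proof (intro ballI impI)
  fix Z assume Z: "Z \<in> V0" "size (B X) < size (B Z)"
  then obtain j where j: "j < length xs" "xs ! j = Z" using xs_props(1) by (metis in_set_conv_nth)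
  have "j < k" using xs_props(3)[OF j(1) k(1)] Z(2) j(2) k(2) by simp
  then have "take k (T \<kappa>1) ! j = \<kappa>1 Z" "take k (T \<kappa>) ! j = \<kappa> Z" using j unfolding T_def by auto
  then show "\<kappa>1 Z = \<kappa> Z" using eq by simp
qed

lemma T_take_Suc: "k < length xs \<Longrightarrow> take (Suc k) (T \<kappa>) = take k (T \<kappa>) @ [\<kappa> (xs ! k)]"
  unfolding T_def by (rule take_Suc_map)

lemma T_take_upd: assumes "\<And>j. j < k \<Longrightarrow> j < length xs \<Longrightarrow> xs ! j \<noteq> Y"
  shows "take k (T (\<kappa>(Y := \<beta>))) = take k (T \<kappa>)"
  unfolding T_def by (rule take_map_eq) (use assms in auto)

lemma T_len: "length (T \<kappa>) = length xs"
  unfolding T_def by simp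

end

lemma isbind_not: "isbind X F \<Longrightarrow> F \<noteq> Dia f" "isbind X F \<Longrightarrow> F \<noteq> Imp f g"
  by (auto simp: isbind_def)

context run
begin

lemma outermost_not_bad:
  assumes XS: "X \<in> Sr" and outer: "\<forall>Y\<in>Sr. B Y \<in> Sub (B X)"
  shows "\<not> bad X"
proof
  assume bad: "bad X"
  let ?F = "B X"
  have XV: "X \<in> V0" using XS unfolding Sr_def by blast
  have FS: "?F \<in> Sub \<phi>" using B_props(1)[OF XV] .
  have Fb: "isbind X ?F" using B_props(2)[OF XV] .
  have finU: "finite (\<Union>Z\<in>V0 - Sr. Vt Z)" using finite_V0 unfolding Sr_def by auto
  then have "\<exists>m. \<forall>n\<in>(\<Union>Z\<in>V0 - Sr. Vt Z). n \<le> m"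
    by (subst finite_nat_set_iff_bounded_le[symmetric])
  then obtain N1 where N1: "\<forall>n\<in>(\<Union>Z\<in>V0 - Sr. Vt Z). n \<le> N1" ..
  have late: "Z \<in> Sr" if "n > N1" "n \<in> Vt Z" "Z \<in> V0" for n Z
  proof (rule ccontr)
    assume "Z \<notin> Sr"
    then have "n \<in> (\<Union>Z\<in>V0 - Sr. Vt Z)" by (intro UN_I[of Z]) (use that in auto)
    then have "n \<le> N1" by (rule bspec[OF N1])
    then show False using that(1) by simp
  qed
  have "infinite (Vt X)" using XS unfolding Sr_def by blast
  then obtain n0 where n0: "n0 \<ge> Suc N1" "n0 \<in> Vt X" using inf_unbounded by blast
  have tail: "pf (r (n0 + d)) \<in> Sub ?F" for d
  proof (induction d)
    case 0
    obtain v Q where "r n0 = GP v (Var X) Q" using n0 unfolding Vt_def by blast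
    then show ?case using B_props(3)[OF XV] Sub_trans[OF _ bdy_Sub[OF Fb]] by simp
  next
    case (Suc d)
    show ?case
    proof (cases "isVarp (r (n0 + d))")
      case True
      then obtain v Z Q where rz: "r (n0 + d) = GP v (Var Z) Q" unfolding isVarp_def by blast
      then have nx: "r (Suc (n0 + d)) = GP v (B Z) Q" "Z \<in> V0" using r_var_next by auto
      have "n0 + d \<in> Vt Z" using rz unfolding Vt_def by blast
      then have "Z \<in> Sr" using late[of "n0 + d" Z] n0 nx by simp
      then show ?thesis using outer nx by simp
    next
      case False
      then have "pf (r (Suc (n0 + d))) \<in> Sub (pf (r (n0 + d)))" using mv_sub rstep by blast
      then show ?thesis using Suc Sub_trans by simp
    qed
  qed
  have tail': "pf (r t) \<in> Sub ?F" if "t \<ge> n0" for t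
    using tail[of "t - n0"] that by simp
  obtain k where k: "k < length xs" "xs ! k = X" using xs_props(1) XV by (metis in_set_conv_nth)
  define s where "s t = take (Suc k) (T (sig (r t)))" for t
  have slen: "length (s t) = Suc k" for t unfolding s_def using k(1) T_len by simp
  define Good where "Good t \<longleftrightarrow> n0 \<le> t \<and> pf (r t) \<noteq> ?F" for t
  have ok: "corr (sig (r t)) (r t)" for t using r_ok sig_props(1) by blast
  have Fnext: "pf (r (Suc t)) \<noteq> ?F" if "pf (r t) = ?F" for t
  proof -
    have "\<exists>v Q. r t = GP v ?F Q"
    proof (cases "r t")
      case (GP v f Q) then show ?thesis using that by auto
    next
      case (GDia v f Q) then have "Dia f = ?F" using that by simp
      then have False using isbind_not(1)[OF Fb, of f] by simp
      then show ?thesis ..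
    next
      case (GImp v f g Q) then have "Imp f g = ?F" using that by simp
      then have False using isbind_not(2)[OF Fb, of f g] by simp
      then show ?thesis ..
    qed
    then obtain v Q where rt: "r t = GP v ?F Q" by blast
    then have "r (Suc t) = GP v (bdy ?F) Q" using rstep[of t] bind_moves[OF Fb] by auto
    then show ?thesis using isbind_size[OF Fb] by auto
  qed
  have intoF: "\<exists>v Q. r t = GP v (Var X) Q" if "t \<ge> n0" "pf (r t) \<noteq> ?F" "pf (r (Suc t)) = ?F" for t
  proof (cases "isVarp (r t)")
    case True
    then obtain v Z Q where rz: "r t = GP v (Var Z) Q" unfolding isVarp_def by blast
    then have nx: "r (Suc t) = GP v (B Z) Q" "Z \<in> V0" using r_var_next by auto
    then have "B Z = B X" using that by simp
    then have "Z = X" using B_props(2)[OF nx(2)] Fb by (auto simp: isbind_def)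
    then show ?thesis using rz by blast
  next
    case False
    then have "?F \<in> Sub (pf (r t))" using mv_sub rstep that(3) by metis
    moreover have "size (pf (r t)) < size ?F" using Sub_size_less tail'[OF that(1)] that(2) by blast
    ultimately show ?thesis using Sub_size by fastforce
  qed
  have mono: "lle lt (s (Suc t)) (s t)" if "Good t" "pf (r (Suc t)) \<noteq> ?F" for t
  proof (cases "isBindp (r t)")
    case False
    have "lle lt (T (sig (r (Suc t)))) (T (sig (r t)))"
      using step(2)[OF r_reach r_ok rstep r_fol False] .
    then show ?thesis unfolding s_def by (rule lle_take)
  next
    case True
    then obtain v G Q Y where p: "r t = GP v G Q" "isbind Y G" unfolding isBindp_def by blast
    obtain \<beta> where \<beta>: "lle lt (T (sig (r (Suc t)))) (T ((sig (r t))(Y := \<beta>)))"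
      using step(3)[OF r_reach r_ok rstep r_fol p] by blast
    have ne: "xs ! j \<noteq> Y" if "j < Suc k" "j < length xs" for j
    proof (cases "Y \<in> V0")
      case True
      have GS: "G \<in> Sub ?F" using tail' \<open>Good t\<close> p unfolding Good_def by (metis pf.simps(1))
      have GB: "G = B Y" using B_eq[OF True Sub_trans[OF GS FS] p(2)] by simp
      have "G \<noteq> ?F" using \<open>Good t\<close> p unfolding Good_def by simp
      then have lt1: "size (B Y) < size ?F" using Sub_size_less[OF GS] GB by simp
      obtain i where i: "i < length xs" "xs ! i = Y" using xs_props(1) True by (metis in_set_conv_nth)
      have "k < i" using xs_props(3)[OF k(1) i(1)] lt1 i(2) k(2) by simp
      then show ?thesis using that i nth_eq_iff_index_eq[OF xs_props(2)] by fastforce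
    next
      case False
      then show ?thesis using that xs_props(1) nth_mem by fastforce
    qed
    have "take (Suc k) (T ((sig (r t))(Y := \<beta>))) = take (Suc k) (T (sig (r t)))"
      by (rule T_take_upd) (use ne in auto)
    then show ?thesis using lle_take[OF \<beta>, of "Suc k"] unfolding s_def by simp
  qed
  have cycle: "llt lt (s (Suc (Suc t))) (s t) \<and> Good (Suc (Suc t))"
    if t: "t \<ge> n0" "r t = GP v (Var X) Q" for t v Q
  proof -
    have r1: "r (Suc t) = GP v ?F Q" using r_var_next t(2) by blast
    have r2: "r (Suc (Suc t)) = GP v (bdy ?F) Q" using rstep[of "Suc t"] r1 bind_moves[OF Fb] by auto
    have good2: "Good (Suc (Suc t))" unfolding Good_def using r2 isbind_size[OF Fb] t(1) by auto
    let ?k = "sig (r t)" and ?k2 = "sig (r (Suc t))" and ?k1 = "sig (r (Suc (Suc t)))"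
    have nb: "\<not> isBindp (r t)" using t(2) unfolding isBindp_def by auto
    have h1: "lle lt (T ?k2) (T ?k)" using step(2)[OF r_reach r_ok rstep r_fol nb] .
    obtain \<beta> where h2: "lle lt (T ?k1) (T (?k2(X := \<beta>)))" using step(3)[OF r_reach r_ok rstep r_fol r1 Fb] by blast
    have Rt: "Reach (GP v (Var X) Q)" using r_reach[of t] t(2) by simp
    have ct: "corr ?k (GP v (Var X) Q)" using ok[of t] t(2) by simp
    obtain \<beta>' where h3: "(\<beta>', ?k X) \<in> lt"
      "\<And>\<kappa>a. \<forall>Z'\<in>V0. size (B X) < size (B Z') \<longrightarrow> \<kappa>a Z' = ?k Z' \<Longrightarrow> corr (\<kappa>a(X := \<beta>')) (GP v (bdy (B X)) Q)"
      using cyc[OF Rt bad ct] by blast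
    have nej: "xs ! j \<noteq> X" if "j < k" "j < length xs" for j
      using that k nth_eq_iff_index_eq[OF xs_props(2)] by fastforce
    have tk: "take (Suc k) (T (\<kappa>(X := \<gamma>))) = take k (T \<kappa>) @ [\<gamma>]" for \<kappa> \<gamma>
      using T_take_Suc[OF k(1), of "\<kappa>(X := \<gamma>)"] T_take_upd[of k X \<kappa> \<gamma>] nej k(2) by simp
    have tk0: "take (Suc k) (T ?k) = take k (T ?k) @ [?k X]" using T_take_Suc[OF k(1)] k(2) by simp
    have lk: "length (take k (T \<kappa>)) = k" for \<kappa> using k(1) T_len by simp
    have "lle lt (take k (T ?k2)) (take k (T ?k))" using lle_take[OF h1] .
    then have "llt lt (s (Suc (Suc t))) (s t)"
    proof (unfold lle_def, elim disjE)
      assume eq: "take k (T ?k2) = take k (T ?k)"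
      have ag: "\<forall>Z'\<in>V0. size (B X) < size (B Z') \<longrightarrow> ?k2 Z' = ?k Z'" by (rule take_agree[OF k eq])
      have "corr (?k2(X := \<beta>')) (r (Suc (Suc t)))" using h3(2)[OF ag] r2 by simp
      then have "lle lt (T ?k1) (T (?k2(X := \<beta>')))" using sig_props(2) ok by blast
      then have a: "lle lt (s (Suc (Suc t))) (take (Suc k) (T (?k2(X := \<beta>'))))"
        unfolding s_def by (rule lle_take)
      have "llt lt (take (Suc k) (T (?k2(X := \<beta>')))) (s t)"
        unfolding s_def tk tk0 eq by (rule llt_snoc_eq[OF h3(1)])
      then show ?thesis using lle_llt_trans[OF trans_lt a] by blast
    next
      assume less: "llt lt (take k (T ?k2)) (take k (T ?k))"
      have a: "lle lt (s (Suc (Suc t))) (take (Suc k) (T (?k2(X := \<beta>))))"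
        unfolding s_def by (rule lle_take[OF h2])
      have "llt lt (take (Suc k) (T (?k2(X := \<beta>)))) (s t)"
        unfolding s_def tk tk0 by (rule llt_snoc_lt[OF less]) (simp add: T_len)
      then show ?thesis using lle_llt_trans[OF trans_lt a] by blast
    qed
    then show ?thesis using good2 by blast
  qed
  have chain: "lle lt (s m) (s t1)" if "Good t1" "Good m" "t1 \<le> m" for t1 m
    using that
  proof (induction m rule: less_induct)
    case (less m)
    show ?case
    proof (cases "m = t1")
      case True then show ?thesis by (simp add: lle_def)
    next
      case False
      then obtain m1 where m1: "m = Suc m1" "t1 \<le> m1" using less.prems(3) by (cases m) auto
      show ?thesis
      proof (cases "pf (r m1) = ?F")
        case False
        then have g1: "Good m1" using m1 less.prems(1) unfolding Good_def by simp
        have "lle lt (s m) (s m1)" using mono[OF g1] less.prems(2) m1 unfolding Good_def by simp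
        moreover have "lle lt (s m1) (s t1)" using less.IH[of m1] m1 g1 less.prems(1) by simp
        ultimately show ?thesis using lle_trans[OF trans_lt] by blast
      next
        case True
        then have "m1 \<noteq> t1" using less.prems(1) unfolding Good_def by auto
        then obtain m2 where m2: "m1 = Suc m2" "t1 \<le> m2" using m1(2) by (cases m1) auto
        have n2: "pf (r m2) \<noteq> ?F" using Fnext[of m2] True m2 by auto
        have g2: "Good m2" using n2 m2 less.prems(1) unfolding Good_def by simp
        obtain v Q where rv: "r m2 = GP v (Var X) Q" using intoF[of m2] g2 True m2 unfolding Good_def by auto
        have "llt lt (s m) (s m2)" using cycle[of m2 v Q] g2 rv m1 m2 unfolding Good_def by simp
        moreover have "lle lt (s m2) (s t1)" using less.IH[of m2] m1 m2 g2 less.prems(1) by simp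
        ultimately show ?thesis using llt_lle_trans[OF trans_lt] unfolding lle_def by blast
      qed
    qed
  qed
  have n0good: "Good n0"
  proof -
    obtain v Q where "r n0 = GP v (Var X) Q" using n0 unfolding Vt_def by blast
    then show ?thesis unfolding Good_def using Fb by (auto simp: isbind_def)
  qed
  obtain t1 where t1: "Good t1" "\<And>y. y \<in> {s t | t. Good t} \<Longrightarrow> \<not> llt lt y (s t1)"
  proof -
    let ?R = "{(as, bs). length as = Suc k \<and> length bs = Suc k \<and> llt lt as bs}"
    let ?Q = "{s t | t. Good t}"
    have wfR: "wf ?R" by (rule wf_llt[OF wf_lt])
    have mem: "s n0 \<in> ?Q" using n0good by blast
    have "\<exists>z\<in>?Q. \<forall>y. (y, z) \<in> ?R \<longrightarrow> y \<notin> ?Q"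
      using wf_eq_minimal[THEN iffD1, OF wfR, rule_format, OF mem] .
    then obtain z where z: "z \<in> ?Q" "\<And>y. (y, z) \<in> ?R \<Longrightarrow> y \<notin> ?Q" by blast
    then obtain t1 where zt: "z = s t1" "Good t1" by blast
    have nl: "\<not> llt lt y (s t1)" if yQ: "y \<in> ?Q" for y
    proof
      assume l: "llt lt y (s t1)"
      obtain t where "y = s t" using yQ by blast
      then have "(y, z) \<in> ?R" using l zt slen by simp
      then show False using z(2) yQ by blast
    qed
    show ?thesis by (rule that[OF zt(2) nl])
  qed
  have "infinite (Vt X)" using XS unfolding Sr_def by blast
  then obtain n where n: "n \<ge> t1" "n \<in> Vt X" using inf_unbounded by blast
  then obtain v Q where rn: "r n = GP v (Var X) Q" unfolding Vt_def by blast
  have gn: "Good n" using n t1(1) rn Fb unfolding Good_def by (auto simp: isbind_def)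
  have c: "llt lt (s (Suc (Suc n))) (s n)" "Good (Suc (Suc n))" using cycle[of n v Q] gn rn unfolding Good_def by auto
  have "lle lt (s n) (s t1)" using chain[OF t1(1) gn n(1)] .
  then have "llt lt (s (Suc (Suc n))) (s t1)" using llt_lle_trans[OF trans_lt c(1)] by blast
  then show False using t1(2)[of "s (Suc (Suc n))"] c(2) by blast
qed

end


context run
begin

lemma regen_iff: "inf_regen r G \<longleftrightarrow> (\<exists>Y\<in>Sr. G = B Y)"
proof
  assume "inf_regen r G"
  then obtain Y where Y: "Y \<in> V0" "G = B Y" using regen_is_B by blast
  then have "infinite (Vt Y)" using inf_regen_iff \<open>inf_regen r G\<close> by simp
  then show "\<exists>Y\<in>Sr. G = B Y" using Y unfolding Sr_def by blast
next
  assume "\<exists>Y\<in>Sr. G = B Y"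
  then obtain Y where "Y \<in> Sr" "G = B Y" by blast
  then show "inf_regen r G" using inf_regen_iff unfolding Sr_def by blast
qed

lemma Sub_antisym: "a \<in> Sub b \<Longrightarrow> b \<in> Sub a \<Longrightarrow> a = b"
  using Sub_size Sub_size_less by fastforce

lemma inf_win: "inf_winner M w \<phi> r = P"
proof -
  obtain X where X: "X \<in> Sr" "\<forall>Y\<in>Sr. B Y \<in> Sub (B X)" using outermost_exists by blast
  have nb: "\<not> bad X" using outermost_not_bad[OF X] .
  have XV: "X \<in> V0" using X unfolding Sr_def by blast
  have outer: "\<forall>G. inf_regen r G \<longrightarrow> G \<in> Sub (B X)"
  proof (intro allI impI)
    fix G assume "inf_regen r G"
    then obtain Y where "Y \<in> Sr" "G = B Y" using regen_iff by blast
    then show "G \<in> Sub (B X)" using X(2) by blast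
  qed
  have regX: "inf_regen r (B X)" using regen_iff X by blast
  have uniqF: "F = B X" if "inf_regen r F" "\<forall>G. inf_regen r G \<longrightarrow> G \<in> Sub F" for F
    using that outer regX Sub_antisym by blast
  have own_bad: "owned_by_I M w \<phi> (B X) \<longleftrightarrow> \<not> bad X" if PI: "P = PI"
  proof -
    have "infinite (Vt X)" using X unfolding Sr_def by blast
    then obtain n where "n \<ge> 0" "n \<in> Vt X" using inf_unbounded by blast
    then obtain v Q where "r n = GP v (Var X) Q" unfolding Vt_def by blast
    then have "r (Suc n) = GP v (B X) Q" using r_var_next by blast
    then have R: "Reach (GP v (B X) Q)" using r_reach[of "Suc n"] by simp
    have PQ: "Prole Q' = Q'" for Q' unfolding Prole_def using PI by simp
    have uq: "Q' = Q" if "Reach (GP v' (B X) Q')" for v' Q' using role_uniq[OF XV that R] .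
    have ow: "owned_by_I M w \<phi> (B X) \<longleftrightarrow> ((Q = Verifier \<and> (\<exists>Y g. B X = Nu Y g)) \<or> (Q = Refuter \<and> (\<exists>Y g. B X = Mu Y g)))"
      unfolding owned_by_I_def using R uq by blast
    have bd: "bad X \<longleftrightarrow> ((Q = Verifier \<and> isMuB X) \<or> (Q = Refuter \<and> B X = Nu X (bdy (B X))))"
      unfolding bad_def PQ using R uq XV by blast
    obtain g0 where g0: "B X = Mu X g0 \<or> B X = Nu X g0" using B_props(2)[OF XV] unfolding isbind_def by blast
    show ?thesis
    proof (cases "B X = Mu X g0")
      case True
      then show ?thesis unfolding ow bd using True by (cases Q) auto
    next
      case False
      then have "B X = Nu X g0" using g0 by blast
      then show ?thesis unfolding ow bd by (cases Q) auto
    qed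
  qed
  show ?thesis
  proof (cases P)
    case PI
    have "owned_by_I M w \<phi> (B X)" using own_bad[OF PI] nb by simp
    then show ?thesis unfolding inf_winner_def using regX outer PI by auto
  next
    case PII
    have "\<not> owned_by_I M w \<phi> (B X)"
    proof
      assume "owned_by_I M w \<phi> (B X)"
      then obtain v Q where R: "Reach (GP v (B X) Q)"
        and c: "(Q = Verifier \<and> (\<exists>Y g. B X = Nu Y g)) \<or> (Q = Refuter \<and> (\<exists>Y g. B X = Mu Y g))"
        unfolding owned_by_I_def by blast
      have PQ: "Prole Q = dual Q" unfolding Prole_def using PII by simp
      obtain g0 where g0: "B X = Mu X g0 \<or> B X = Nu X g0" using B_props(2)[OF XV] unfolding isbind_def by blast
      have "bad X"
      proof (cases "B X = Mu X g0")
        case True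
        then have "Q = Refuter" using c by auto
        then have "Prole Q = Verifier \<and> isMuB X" using PQ True by simp
        then show ?thesis unfolding bad_def using XV R by blast
      next
        case False
        then have Nu: "B X = Nu X g0" using g0 by blast
        then have "Q = Verifier" using c by auto
        then have "Prole Q = Refuter \<and> B X = Nu X (bdy (B X))" using PQ Nu by simp
        then show ?thesis unfolding bad_def using XV R by blast
      qed
      then show False using nb by simp
    qed
    then show ?thesis unfolding inf_winner_def using uniqF PII by auto
  qed
qed

end

context pl
begin

lemma fin_win:
  assumes fr: "fin_run M w \<phi> ps" and ff: "fin_follows M \<phi> P tau ps" and ok0: "okp (init_pos w \<phi>)"
  shows "fin_winner M \<phi> ps = P"
proof -
  have ne: "ps \<noteq> []" and hd: "hd ps = init_pos w \<phi>"
    and st: "\<And>i. Suc i < length ps \<Longrightarrow> ps ! Suc i \<in> moves M \<phi> (ps ! i)"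
    and lst: "moves M \<phi> (last ps) = {}" using fr unfolding fin_run_def by auto
  have inv: "Reach (ps ! i) \<and> okp (ps ! i)" if "i < length ps" for i
    using that
  proof (induction i)
    case 0
    have "ps ! 0 = init_pos w \<phi>" using hd ne by (simp add: hd_conv_nth)
    then show ?case using ok0 Reach_init unfolding init_pos_def by simp
  next
    case (Suc i)
    have IH: "Reach (ps ! i) \<and> okp (ps ! i)" using Suc by simp
    have mv: "ps ! Suc i \<in> moves M \<phi> (ps ! i)" using st Suc.prems by blast
    have fo: "owner M \<phi> (ps ! i) = P \<longrightarrow> ps ! Suc i = tau (ps ! i)" using ff Suc.prems unfolding fin_follows_def by blast
    show ?case using Reach_step[OF _ mv] step(1)[OF _ _ mv fo] IH by blast
  qed
  have l: "last ps = ps ! (length ps - 1)" using ne by (simp add: last_conv_nth)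
  have "Reach (last ps) \<and> okp (last ps)" using inv[of "length ps - 1"] ne l by simp
  then have "owner M \<phi> (last ps) \<noteq> P" using dead_end lst by blast
  then show ?thesis unfolding fin_winner_def by (cases P; cases "owner M \<phi> (last ps)") auto
qed

lemma tau_wins: assumes ok0: "okp (init_pos w \<phi>)" shows "winning_strategy M w \<phi> P tau"
proof -
  have "inf_winner M w \<phi> r = P" if "inf_run M w \<phi> r" "inf_follows M \<phi> P tau r" for r
  proof -
    interpret R: run M w \<phi> P r
      by unfold_locales (use that ok0 in \<open>auto simp: inf_run_def\<close>)
    show ?thesis using R.inf_win .
  qed
  then show ?thesis unfolding winning_strategy_def using tau_strategy fin_win ok0 by blast
qed

lemma init_ok: assumes "(P = PI \<and> sat M w \<phi>) \<or> (P = PII \<and> \<not> sat M w \<phi>)"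
  shows "okp (init_pos w \<phi>)"
proof -
  have e: "sem M (rk \<kappa>) \<phi> = sem M (\<lambda>_. {}) \<phi>" for \<kappa> by (rule sem_fv) (simp add: fv_phi)
  have "corr \<kappa> (init_pos w \<phi>)" for \<kappa>
    using assms w_in unfolding init_pos_def sat_def by (auto simp: e Prole_def)
  then show ?thesis by blast
qed

end

context setting
begin

lemma owner_cases: "owner M \<phi> p = PI \<or> owner M \<phi> p = PII"
  by (cases "owner M \<phi> p") auto

lemma consistency: assumes w1: "winning_strategy M w \<phi> PI \<sigma>1" and w2: "winning_strategy M w \<phi> PII \<sigma>2"
  shows False
proof -
  define nxt where "nxt p = (if owner M \<phi> p = PI then \<sigma>1 p else \<sigma>2 p)" for p
  define r where "r n = (nxt ^^ n) (init_pos w \<phi>)" for n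
  have s1: "strategy M \<phi> PI \<sigma>1" and s2: "strategy M \<phi> PII \<sigma>2" using w1 w2 unfolding winning_strategy_def by auto
  have rS: "r (Suc n) = nxt (r n)" for n unfolding r_def by simp
  have nxt_mv: "nxt p \<in> moves M \<phi> p" if "moves M \<phi> p \<noteq> {}" for p
    using s1 s2 that owner_cases[of p] unfolding strategy_def nxt_def by auto
  have f1: "owner M \<phi> (r n) = PI \<longrightarrow> r (Suc n) = \<sigma>1 (r n)" for n unfolding rS nxt_def by simp
  have f2: "owner M \<phi> (r n) = PII \<longrightarrow> r (Suc n) = \<sigma>2 (r n)" for n unfolding rS nxt_def by auto
  show False
  proof (cases "\<exists>n. moves M \<phi> (r n) = {}")
    case False
    then have ir: "inf_run M w \<phi> r" unfolding inf_run_def using nxt_mv rS by (simp add: r_def)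
    have "inf_winner M w \<phi> r = PI" using w1 ir f1 unfolding winning_strategy_def inf_follows_def by blast
    moreover have "inf_winner M w \<phi> r = PII" using w2 ir f2 unfolding winning_strategy_def inf_follows_def by blast
    ultimately show False by simp
  next
    case True
    define n0 where "n0 = (LEAST n. moves M \<phi> (r n) = {})"
    have n0: "moves M \<phi> (r n0) = {}" unfolding n0_def by (rule LeastI_ex[OF True])
    have before: "moves M \<phi> (r i) \<noteq> {}" if "i < n0" for i
      by (rule not_less_Least[OF that[unfolded n0_def]])
    define ps where "ps = map r [0..<Suc n0]"
    have len: "length ps = Suc n0" unfolding ps_def by simp
    have nth: "ps ! i = r i" if "i < Suc n0" for i using that unfolding ps_def by (simp del: upt_Suc)
    have fr: "fin_run M w \<phi> ps"
      unfolding fin_run_def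
    proof (intro conjI allI impI)
      show "ps \<noteq> []" unfolding ps_def by simp
      show "hd ps = init_pos w \<phi>" unfolding ps_def r_def by (simp add: hd_map del: upt_Suc)
      fix i assume "Suc i < length ps"
      then show "ps ! Suc i \<in> moves M \<phi> (ps ! i)" using nth len rS nxt_mv before by simp
    next
      have "last ps = ps ! n0" using len last_conv_nth[of ps] by fastforce
      then show "moves M \<phi> (last ps) = {}" using n0 nth[of n0] by simp
    qed
    have ff1: "fin_follows M \<phi> PI \<sigma>1 ps" unfolding fin_follows_def using nth len f1 by auto
    have ff2: "fin_follows M \<phi> PII \<sigma>2 ps" unfolding fin_follows_def using nth len f2 by auto
    have "fin_winner M \<phi> ps = PI" using w1 fr ff1 unfolding winning_strategy_def by blast
    moreover have "fin_winner M \<phi> ps = PII" using w2 fr ff2 unfolding winning_strategy_def by blast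
    ultimately show False by simp
  qed
qed

end

theorem mainTheorem4:
  fixes M :: "('w, 'p) ck_struct" and w :: 'w and \<phi> :: "('p, 'v) fm"
  assumes "ck_model M" and "w \<in> mW M"
    and "mu_formula \<phi>" and "sentence \<phi>" and "well_named \<phi>"
  shows "(has_winning_strategy M w \<phi> PI \<longleftrightarrow> sat M w \<phi>) \<and>
         (has_winning_strategy M w \<phi> PII \<longleftrightarrow> \<not> sat M w \<phi>)"
proof -
  interpret S: setting M w \<phi> by unfold_locales (use assms in auto)
  interpret I: pl M w \<phi> PI by unfold_locales
  interpret II: pl M w \<phi> PII by unfold_locales
  have a: "sat M w \<phi> \<Longrightarrow> has_winning_strategy M w \<phi> PI"
    unfolding has_winning_strategy_def using I.tau_wins I.init_ok by blast
  have b: "\<not> sat M w \<phi> \<Longrightarrow> has_winning_strategy M w \<phi> PII"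
    unfolding has_winning_strategy_def using II.tau_wins II.init_ok by blast
  have c: "\<not> (has_winning_strategy M w \<phi> PI \<and> has_winning_strategy M w \<phi> PII)"
    unfolding has_winning_strategy_def using S.consistency by blast
  show ?thesis using a b c by blast
qed


end
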